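(* Let $\{Y_i:i\geq1\}$ be i.i.d. positive integer-valued random variables and $\{\widetilde Y_j:j\geq1\}$ an independent copy of this sequence; let $Y$ denote a random variable with the law of $Y_1$. Set $S_0=\widetilde S_0=0$, $S_n=Y_1+\dots+Y_n$, $\widetilde S_n=\widetilde Y_1+\dots+\widetilde Y_n$. Let $h$ be the largest positive integer such that the law of $Y$ is supported on $h\mathbb N^*$, where $\mathbb N^*=\{1,2,\dots\}$, and for $i,j\in h\mathbb N$ (with $\mathbb N=\{0,1,2,\dots\}$) let $$L_{i,j}=\inf\{\ell\geq1:\ \exists m,n\geq0 \text{ with } i+S_m=\ell=j+\widetilde S_n\}.$$ Let $1\leq p<\infty$ be real and assume $E(Y^{p+1})<\infty$. Then there exists a finite constant $C$ such that for all $i,j\in h\mathbb N$, $$E(L_{i,j}^p)\leq C(1+i^p+j^p).$$ *)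

theory Defs
  imports "HOL-Probability.Probability" "HOL-Library.Extended_Nat"
begin

definition psum :: "(nat \<Rightarrow> 'a \<Rightarrow> nat) \<Rightarrow> nat \<Rightarrow> 'a \<Rightarrow> nat" where
  "psum Y n \<omega> = (\<Sum>k\<in>{1..n}. Y k \<omega>)"

definition meet_time :: "(nat \<Rightarrow> 'a \<Rightarrow> nat) \<Rightarrow> (nat \<Rightarrow> 'a \<Rightarrow> nat) \<Rightarrow> nat \<Rightarrow> nat \<Rightarrow> 'a \<Rightarrow> enat" where
  "meet_time Y Yt i j \<omega> =
     Inf {enat l | l. l \<ge> 1 \<and> (\<exists>m n. i + psum Y m \<omega> = l \<and> j + psum Yt n \<omega> = l)}"

definition enat_powr :: "enat \<Rightarrow> real \<Rightarrow> ennreal" where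
  "enat_powr x p = (case x of enat l \<Rightarrow> ennreal (real l powr p) | \<infinity> \<Rightarrow> \<infinity>)"

definition span :: "'a measure \<Rightarrow> ('a \<Rightarrow> nat) \<Rightarrow> nat" where
  "span M X = (GREATEST h. h > 0 \<and> (AE \<omega> in M. \<exists>k\<ge>1. X \<omega> = h * k))"

end

theory Submission
  imports Defs
begin

lemma powr_incr_bounds:
  fixes u t p :: real
  assumes u: "0 < u" and t: "0 \<le> t" and p: "1 \<le> p"
  shows "p * t * u powr (p - 1) \<le> (u + t) powr p - u powr p"
    and "(u + t) powr p - u powr p \<le> p * t * (u + t) powr (p - 1)"
proof -
  have both: "p * t * u powr (p - 1) \<le> (u + t) powr p - u powr p \<and>
        (u + t) powr p - u powr p \<le> p * t * (u + t) powr (p - 1)"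
  proof (cases "t = 0")
    case True then show ?thesis by simp
  next
    case False
    with t have tp: "0 < t" by simp
    have "\<exists>z. u < z \<and> z < u + t \<and> ((u + t) powr p - u powr p = (u + t - u) * (p * z powr (p - 1)))"
      apply (rule MVT2[where f = "\<lambda>x. x powr p" and f' = "\<lambda>z. p * z powr (p - 1)"])
      using tp apply simp
      using u by (intro has_real_derivative_powr) auto
    then obtain z where z: "u < z" "z < u + t" "(u + t) powr p - u powr p = t * (p * z powr (p - 1))" by auto
    have "u powr (p - 1) \<le> z powr (p - 1)" using z u p by (intro powr_mono2) auto
    moreover have "z powr (p - 1) \<le> (u + t) powr (p - 1)" using z u p by (intro powr_mono2) auto
    ultimately show ?thesis using z tp p
      by (simp add: mult_left_mono mult.assoc mult.left_commute)
  qed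
  then show "p * t * u powr (p - 1) \<le> (u + t) powr p - u powr p"
    and "(u + t) powr p - u powr p \<le> p * t * (u + t) powr (p - 1)" by auto
qed

definition absb :: "nat \<Rightarrow> nat \<Rightarrow> bool" where "absb a b \<longleftrightarrow> a = b \<and> 1 \<le> a"

fun stp :: "nat \<times> nat \<Rightarrow> nat \<Rightarrow> nat \<times> nat" where
  "stp (a, b) y = (if a \<le> b then (a + y, b) else (a, b + y))"

definition Pop :: "nat measure \<Rightarrow> (nat \<times> nat \<Rightarrow> ennreal) \<Rightarrow> nat \<times> nat \<Rightarrow> ennreal" where
  "Pop mu f s = (if absb (fst s) (snd s) then f s else \<integral>\<^sup>+y. f (stp s y) \<partial>mu)"

locale kern = prob_space mu for mu :: "nat measure" +
  assumes sets_mu: "sets mu = sets (count_space UNIV)"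
begin

lemma meas_any: "f \<in> borel_measurable mu"
  by (simp add: measurable_cong_sets[OF sets_mu refl])

lemma Pop_mono: assumes "\<And>s. f s \<le> g s" shows "Pop mu f s \<le> Pop mu g s"
  unfolding Pop_def using assms by (simp add: nn_integral_mono)

lemma Pow_mono: "(\<And>s. f s \<le> g s) \<Longrightarrow> (Pop mu ^^ k) f s \<le> (Pop mu ^^ k) g s"
proof (induction k arbitrary: s)
  case 0 then show ?case by simp
next
  case (Suc k) then show ?case by (simp add: Pop_mono)
qed

lemma Pop_add: "Pop mu (\<lambda>s. f s + g s) s = Pop mu f s + Pop mu g s"
  unfolding Pop_def by (auto intro!: nn_integral_add meas_any)

lemma Pop_cmult: "Pop mu (\<lambda>s. c * f s) s = c * Pop mu f s"
  unfolding Pop_def by (auto intro!: nn_integral_cmult meas_any)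

lemma Pow_add: "(Pop mu ^^ k) (\<lambda>s. f s + g s) s = (Pop mu ^^ k) f s + (Pop mu ^^ k) g s"
proof (induction k arbitrary: s)
  case 0 then show ?case by simp
next
  case (Suc k)
  have e: "(Pop mu ^^ k) (\<lambda>s. f s + g s) = (\<lambda>s. (Pop mu ^^ k) f s + (Pop mu ^^ k) g s)"
    by (rule ext) (rule Suc.IH)
  have "(Pop mu ^^ Suc k) (\<lambda>s. f s + g s) s = Pop mu (\<lambda>s. (Pop mu ^^ k) f s + (Pop mu ^^ k) g s) s"
    by (simp only: funpow.simps comp_def e)
  then show ?case by (simp add: Pop_add)
qed

lemma Pow_cmult: "(Pop mu ^^ k) (\<lambda>s. c * f s) s = c * (Pop mu ^^ k) f s"
proof (induction k arbitrary: s)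
  case 0 then show ?case by simp
next
  case (Suc k)
  have e: "(Pop mu ^^ k) (\<lambda>s. c * f s) = (\<lambda>s. c * (Pop mu ^^ k) f s)"
    by (rule ext) (rule Suc.IH)
  have "(Pop mu ^^ Suc k) (\<lambda>s. c * f s) s = Pop mu (\<lambda>s. c * (Pop mu ^^ k) f s) s"
    by (simp only: funpow.simps comp_def e)
  then show ?case by (simp add: Pop_cmult)
qed

lemma Pow_abs: "absb (fst s) (snd s) \<Longrightarrow> (Pop mu ^^ k) f s = f s"
  by (induction k) (auto simp: Pop_def)

lemma Pop_point: "\<not> absb (fst s) (snd s) \<Longrightarrow> emeasure mu {y} * f (stp s y) \<le> Pop mu f s"
proof -
  assume na: "\<not> absb (fst s) (snd s)"
  have "emeasure mu {y} * f (stp s y) = \<integral>\<^sup>+x. f (stp s y) * indicator {y} x \<partial>mu"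
    by (subst nn_integral_cmult_indicator) (auto simp: sets_mu mult.commute)
  also have "\<dots> \<le> \<integral>\<^sup>+x. f (stp s x) \<partial>mu"
    by (intro nn_integral_mono) (auto split: split_indicator)
  finally show ?thesis using na by (simp add: Pop_def)
qed

lemma Pow_mono_good:
  assumes AEg: "AE y in mu. G y" and Gstp: "\<And>s y. S s \<Longrightarrow> G y \<Longrightarrow> S (stp s y)"
    and le: "\<And>s. S s \<Longrightarrow> f s \<le> g s" and Ss: "S s"
  shows "(Pop mu ^^ k) f s \<le> (Pop mu ^^ k) g s"
  using Ss
proof (induction k arbitrary: s)
  case 0 then show ?case using le by simp
next
  case (Suc k)
  show ?case
  proof (cases "absb (fst s) (snd s)")
    case True then show ?thesis using Suc by (simp add: Pow_abs le del: funpow.simps)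
  next
    case False
    have "\<integral>\<^sup>+y. (Pop mu ^^ k) f (stp s y) \<partial>mu \<le> \<integral>\<^sup>+y. (Pop mu ^^ k) g (stp s y) \<partial>mu"
      using AEg by (intro nn_integral_mono_AE) (auto elim!: eventually_mono intro!: Suc.IH Gstp Suc.prems)
    moreover have "\<And>F. Pop mu F s = \<integral>\<^sup>+y. F (stp s y) \<partial>mu" using False by (simp add: Pop_def)
    ultimately show ?thesis by (simp only: funpow.simps comp_def)
  qed
qed

end

definition fM :: "nat \<Rightarrow> nat \<times> nat \<Rightarrow> ennreal" where
  "fM m0 s = (if absb (fst s) (snd s) \<and> m0 \<le> fst s then 1 else 0)"

context kern begin

lemma prodm_le1: "prod_list (map (\<lambda>y. emeasure mu {y}) S) \<le> 1"
proof (induction S)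
  case Nil then show ?case by simp
next
  case (Cons y S)
  have "emeasure mu {y} \<le> 1" by (rule emeasure_le_1)
  then show ?case using Cons by (simp add: mult_le_one)
qed

lemma path_lemma:
  assumes "a + sum_list S = b + sum_list T" "1 \<le> a + sum_list S" "length S + length T \<le> k"
    "m0 \<le> max a b"
  shows "prod_list (map (\<lambda>y. emeasure mu {y}) S) * prod_list (map (\<lambda>y. emeasure mu {y}) T)
     \<le> (Pop mu ^^ k) (fM m0) (a, b)"
  using assms
proof (induction k arbitrary: a b S T)
  case 0
  then have "absb a b" using 0 by (simp add: absb_def)
  then show ?case using 0 by (simp add: fM_def absb_def mult_le_one prodm_le1)
next
  case (Suc k)
  show ?case
  proof (cases "absb a b")
    case True
    then have "(Pop mu ^^ Suc k) (fM m0) (a, b) = 1"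
      using Suc.prems by (subst Pow_abs) (auto simp: fM_def absb_def)
    then show ?thesis by (simp add: mult_le_one prodm_le1)
  next
    case False
    show ?thesis
    proof (cases "a \<le> b")
      case True
      obtain y S' where S: "S = y # S'"
        using Suc.prems False True by (cases S) (auto simp: absb_def)
      have "prod_list (map (\<lambda>y. emeasure mu {y}) S') * prod_list (map (\<lambda>y. emeasure mu {y}) T)
          \<le> (Pop mu ^^ k) (fM m0) (a + y, b)"
        using Suc.prems S by (intro Suc.IH) auto
      then have "emeasure mu {y} * (prod_list (map (\<lambda>y. emeasure mu {y}) S') * prod_list (map (\<lambda>y. emeasure mu {y}) T))
          \<le> emeasure mu {y} * (Pop mu ^^ k) (fM m0) (stp (a, b) y)"
        using True by (simp add: mult_left_mono)
      also have "\<dots> \<le> Pop mu ((Pop mu ^^ k) (fM m0)) (a, b)"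
        using False by (intro Pop_point) simp
      finally show ?thesis using S by (simp add: mult.assoc)
    next
      case nle: False
      obtain y T' where T: "T = y # T'"
        using Suc.prems False nle by (cases T) (auto simp: absb_def)
      have "prod_list (map (\<lambda>y. emeasure mu {y}) S) * prod_list (map (\<lambda>y. emeasure mu {y}) T')
          \<le> (Pop mu ^^ k) (fM m0) (a, b + y)"
        using Suc.prems T by (intro Suc.IH) auto
      then have "emeasure mu {y} * (prod_list (map (\<lambda>y. emeasure mu {y}) S) * prod_list (map (\<lambda>y. emeasure mu {y}) T'))
          \<le> emeasure mu {y} * (Pop mu ^^ k) (fM m0) (stp (a, b) y)"
        using nle by (simp add: mult_left_mono)
      also have "\<dots> \<le> Pop mu ((Pop mu ^^ k) (fM m0)) (a, b)"
        using False by (intro Pop_point) simp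
      finally show ?thesis using T by (simp add: mult_ac)
    qed
  qed
qed

end

definition dd :: "nat \<times> nat \<Rightarrow> nat" where
  "dd s = (if fst s \<le> snd s then snd s - fst s else fst s - snd s)"
definition mx :: "nat \<times> nat \<Rightarrow> nat" where
  "mx s = max (fst s) (snd s)"

lemma stp_lt: "y < dd s \<Longrightarrow> mx (stp s y) = mx s \<and> dd (stp s y) = dd s - y"
  by (cases s) (auto simp: dd_def mx_def)
lemma stp_eq: "y = dd s \<Longrightarrow> fst (stp s y) = mx s \<and> snd (stp s y) = mx s"
  by (cases s) (auto simp: dd_def mx_def)
lemma stp_gt: "dd s < y \<Longrightarrow> mx (stp s y) = mx s + (y - dd s) \<and> dd (stp s y) = y - dd s"
  by (cases s) (auto simp: dd_def mx_def)
lemma dd_le_mx: "dd s \<le> mx s"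
  by (auto simp: dd_def mx_def)
lemma mx_stp: "mx s \<le> mx (stp s y)"
  by (cases s) (auto simp: mx_def)
lemma abs_mx: "absb (fst s) (snd s) \<Longrightarrow> dd s = 0 \<and> mx s = fst s"
  by (auto simp: absb_def dd_def mx_def)

definition Xf :: "real \<Rightarrow> nat \<times> nat \<Rightarrow> real" where
  "Xf B s = real (mx s) + real (dd s) + B"

lemma Xf_stp: "Xf B (stp s y) \<le> Xf B s + 2 * real y"
proof -
  consider "y < dd s" | "y = dd s" | "dd s < y" by linarith
  then show ?thesis
  proof cases
    case 1 then show ?thesis using stp_lt[OF 1] by (simp add: Xf_def)
  next
    case 2
    have "dd (stp s y) = 0" using stp_eq[OF 2] by (simp add: dd_def)
    then show ?thesis using stp_eq[OF 2] by (simp add: Xf_def mx_def)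
  next
    case 3 then show ?thesis using stp_gt[OF 3] by (simp add: Xf_def of_nat_diff)
  qed
qed

lemma pt_bound:
  fixes x y z p \<alpha> :: real
  assumes x: "1 \<le> x" and y: "0 \<le> y" and z: "0 < z" "z \<le> x + 2 * y" and p: "1 \<le> p" and a: "0 \<le> \<alpha>"
  shows "z powr p + \<alpha> * z powr (p - 1) \<le> x powr p + x powr (p - 1) * ((p + \<alpha>) * (1 + 2 * y) powr (p + 1))"
proof -
  let ?w = "x + 2 * y"
  have w1: "?w powr (p - 1) \<le> x powr (p - 1) * (1 + 2 * y) powr (p - 1)"
  proof -
    have "?w \<le> x * (1 + 2 * y)" using x y mult_right_mono[OF x y] by (simp add: algebra_simps)
    then have "?w powr (p - 1) \<le> (x * (1 + 2 * y)) powr (p - 1)" using x y p by (intro powr_mono2) auto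
    also have "\<dots> = x powr (p - 1) * (1 + 2 * y) powr (p - 1)" using x y by (simp add: powr_mult)
    finally show ?thesis .
  qed
  have e1: "(1 + 2 * y) powr (p - 1) \<le> (1 + 2 * y) powr (p + 1)" using y by (intro powr_mono) auto
  have e2: "2 * y * (1 + 2 * y) powr (p - 1) \<le> (1 + 2 * y) powr (p + 1)"
  proof -
    have "2 * y * (1 + 2 * y) powr (p - 1) \<le> (1 + 2 * y) * (1 + 2 * y) powr (p - 1)"
      using y by (intro mult_right_mono) auto
    also have "\<dots> = (1 + 2 * y) powr p" using y by (simp add: powr_mult_base)
    also have "\<dots> \<le> (1 + 2 * y) powr (p + 1)" using y by (intro powr_mono) auto
    finally show ?thesis .
  qed
  have zp: "z powr p \<le> ?w powr p" using z p by (intro powr_mono2) auto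
  have zq: "z powr (p - 1) \<le> ?w powr (p - 1)" using z p by (intro powr_mono2) auto
  have "?w powr p - x powr p \<le> p * (2 * y) * ?w powr (p - 1)"
    using powr_incr_bounds(2)[of x "2 * y" p] x y p by simp
  also have "\<dots> \<le> p * (2 * y) * (x powr (p - 1) * (1 + 2 * y) powr (p - 1))"
    using w1 p y by (intro mult_left_mono) auto
  also have "\<dots> = p * x powr (p - 1) * (2 * y * (1 + 2 * y) powr (p - 1))" by (simp add: mult_ac)
  also have "\<dots> \<le> p * x powr (p - 1) * (1 + 2 * y) powr (p + 1)"
    using e2 p by (intro mult_left_mono) auto
  finally have A: "?w powr p \<le> x powr p + p * x powr (p - 1) * (1 + 2 * y) powr (p + 1)" by simp
  have "\<alpha> * z powr (p - 1) \<le> \<alpha> * (x powr (p - 1) * (1 + 2 * y) powr (p - 1))"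
    using zq w1 a by (intro mult_left_mono) auto
  also have "\<dots> \<le> \<alpha> * (x powr (p - 1) * (1 + 2 * y) powr (p + 1))"
    using e1 a by (intro mult_left_mono) auto
  finally have Bq: "\<alpha> * z powr (p - 1) \<le> \<alpha> * (x powr (p - 1) * (1 + 2 * y) powr (p + 1))" .
  show ?thesis using A Bq zp by (simp add: algebra_simps)
qed

locale kern2 = kern mu for mu :: "nat measure" +
  fixes p :: real
  assumes p1: "1 \<le> p"
    and mom_fin: "(\<integral>\<^sup>+y. ennreal ((1 + 2 * real y) powr (p + 1)) \<partial>mu) < \<infinity>"
begin

definition mom :: real where "mom = enn2real (\<integral>\<^sup>+y. ennreal ((1 + 2 * real y) powr (p + 1)) \<partial>mu)"

lemma mom_eq: "(\<integral>\<^sup>+y. ennreal ((1 + 2 * real y) powr (p + 1)) \<partial>mu) = ennreal mom"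
  unfolding mom_def using mom_fin by (simp add: ennreal_enn2real_if)

lemma mom_nonneg: "0 \<le> mom" unfolding mom_def by simp

lemma Phi_bound:
  shows "\<exists>\<alpha>\<ge>0. \<forall>B s. 1 \<le> B \<longrightarrow> (Pop mu ^^ k) (\<lambda>s. ennreal (Xf B s powr p)) s
           \<le> ennreal (Xf B s powr p + \<alpha> * Xf B s powr (p - 1))"
proof (induction k)
  case 0
  show ?case by (intro exI[of _ 0]) simp
next
  case (Suc k)
  then obtain \<alpha> where a: "0 \<le> \<alpha>" and IH0: "\<And>B s. 1 \<le> B \<Longrightarrow> (Pop mu ^^ k) (\<lambda>s. ennreal (Xf B s powr p)) s
           \<le> ennreal (Xf B s powr p + \<alpha> * Xf B s powr (p - 1))" by blast
  show ?case
  proof (intro exI[of _ "(p + \<alpha>) * mom"] conjI allI impI)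
    show "0 \<le> (p + \<alpha>) * mom" using a p1 mom_nonneg by simp
    fix B s assume B: "1 \<le> (B::real)"
    have X1: "\<And>s. 1 \<le> Xf B s" using B by (simp add: Xf_def)
    note IH = IH0[OF B]
    show "(Pop mu ^^ Suc k) (\<lambda>s. ennreal (Xf B s powr p)) s
           \<le> ennreal (Xf B s powr p + (p + \<alpha>) * mom * Xf B s powr (p - 1))"
    proof (cases "absb (fst s) (snd s)")
      case True
      then have "(Pop mu ^^ Suc k) (\<lambda>s. ennreal (Xf B s powr p)) s = ennreal (Xf B s powr p)"
        by (rule Pow_abs)
      then show ?thesis using a p1 mom_nonneg by (simp add: ennreal_leI)
    next
      case False
      let ?x = "Xf B s"
      have "(Pop mu ^^ Suc k) (\<lambda>s. ennreal (Xf B s powr p)) s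
          = \<integral>\<^sup>+y. (Pop mu ^^ k) (\<lambda>s. ennreal (Xf B s powr p)) (stp s y) \<partial>mu"
        using False by (simp add: Pop_def)
      also have "\<dots> \<le> \<integral>\<^sup>+y. ennreal (?x powr p) + ennreal (?x powr (p - 1) * (p + \<alpha>)) * ennreal ((1 + 2 * real y) powr (p + 1)) \<partial>mu"
      proof (intro nn_integral_mono)
        fix y
        have "(Pop mu ^^ k) (\<lambda>s. ennreal (Xf B s powr p)) (stp s y)
            \<le> ennreal (Xf B (stp s y) powr p + \<alpha> * Xf B (stp s y) powr (p - 1))" by (rule IH)
        also have "\<dots> \<le> ennreal (?x powr p + ?x powr (p - 1) * ((p + \<alpha>) * (1 + 2 * real y) powr (p + 1)))"
          using X1[of s] X1[of "stp s y"] Xf_stp[of B s y] p1 a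
          by (intro ennreal_leI pt_bound) auto
        also have "\<dots> = ennreal (?x powr p) + ennreal (?x powr (p - 1) * (p + \<alpha>)) * ennreal ((1 + 2 * real y) powr (p + 1))"
          using a p1 by (simp add: ennreal_plus[symmetric] ennreal_mult[symmetric] mult_ac del: ennreal_plus)
        finally show "(Pop mu ^^ k) (\<lambda>s. ennreal (Xf B s powr p)) (stp s y)
            \<le> ennreal (?x powr p) + ennreal (?x powr (p - 1) * (p + \<alpha>)) * ennreal ((1 + 2 * real y) powr (p + 1))" .
      qed
      also have "\<dots> = ennreal (?x powr p) + ennreal (?x powr (p - 1) * (p + \<alpha>)) * ennreal mom"
        by (simp add: nn_integral_add nn_integral_cmult meas_any mom_eq emeasure_space_1)
      also have "\<dots> = ennreal (?x powr p + (p + \<alpha>) * mom * ?x powr (p - 1))"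
        using a p1 mom_nonneg by (simp add: ennreal_plus[symmetric] ennreal_mult[symmetric] mult_ac del: ennreal_plus)
      finally show ?thesis .
    qed
  qed
qed

end

lemma pt_bound2:
  fixes x y z p :: real
  assumes x: "1 \<le> x" and y: "0 \<le> y" and z: "0 < z" "z \<le> x + 2 * y" and p: "1 \<le> p"
  shows "z powr p \<le> x powr p + p * x powr (p - 1) * (1 + 2 * y) powr p"
proof -
  let ?w = "x + 2 * y"
  have w1: "?w powr (p - 1) \<le> x powr (p - 1) * (1 + 2 * y) powr (p - 1)"
  proof -
    have "?w \<le> x * (1 + 2 * y)" using x y mult_right_mono[OF x y] by (simp add: algebra_simps)
    then have "?w powr (p - 1) \<le> (x * (1 + 2 * y)) powr (p - 1)" using x y p by (intro powr_mono2) auto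
    also have "\<dots> = x powr (p - 1) * (1 + 2 * y) powr (p - 1)" using x y by (simp add: powr_mult)
    finally show ?thesis .
  qed
  have e2: "2 * y * (1 + 2 * y) powr (p - 1) \<le> (1 + 2 * y) powr p"
  proof -
    have "2 * y * (1 + 2 * y) powr (p - 1) \<le> (1 + 2 * y) * (1 + 2 * y) powr (p - 1)"
      using y by (intro mult_right_mono) auto
    also have "\<dots> = (1 + 2 * y) powr p" using y by (simp add: powr_mult_base)
    finally show ?thesis .
  qed
  have zp: "z powr p \<le> ?w powr p" using z p by (intro powr_mono2) auto
  have "?w powr p - x powr p \<le> p * (2 * y) * ?w powr (p - 1)"
    using powr_incr_bounds(2)[of x "2 * y" p] x y p by simp
  also have "\<dots> \<le> p * (2 * y) * (x powr (p - 1) * (1 + 2 * y) powr (p - 1))"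
    using w1 p y by (intro mult_left_mono) auto
  also have "\<dots> = p * x powr (p - 1) * (2 * y * (1 + 2 * y) powr (p - 1))" by (simp add: mult_ac)
  also have "\<dots> \<le> p * x powr (p - 1) * (1 + 2 * y) powr p"
    using e2 p by (intro mult_left_mono) auto
  finally show ?thesis using zp by simp
qed

definition Wr :: "real \<Rightarrow> real \<Rightarrow> nat \<times> nat \<Rightarrow> real" where
  "Wr p B s = (if absb (fst s) (snd s) then real (fst s) powr p else 2 * Xf B s powr p)"

lemma decr_bound:
  fixes X y p :: real
  assumes p: "1 \<le> p" and u: "X / 2 \<le> X - y" and y: "0 \<le> y" and X: "0 < X"
  shows "(X - y) powr p + p / 2 powr (p - 1) * X powr (p - 1) * y \<le> X powr p"
proof -
  have u0: "0 < X - y" using u X by simp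
  have "p * y * (X - y) powr (p - 1) \<le> (X - y + y) powr p - (X - y) powr p"
    using powr_incr_bounds(1)[OF u0 y p] .
  moreover have "(X / 2) powr (p - 1) \<le> (X - y) powr (p - 1)" using u X p by (intro powr_mono2) auto
  moreover have "(X / 2) powr (p - 1) = X powr (p - 1) / 2 powr (p - 1)" using X by (simp add: powr_divide)
  ultimately have "p * y * (X powr (p - 1) / 2 powr (p - 1)) \<le> X powr p - (X - y) powr p"
    using p y by (smt (verit) mult_left_mono mult_nonneg_nonneg)
  then show ?thesis by (simp add: field_simps)
qed

lemma Wr_le: assumes "1 \<le> B" "0 \<le> p" shows "Wr p B s \<le> 2 * Xf B s powr p"
proof (cases "absb (fst s) (snd s)")
  case True
  then have "real (fst s) \<le> Xf B s" using abs_mx[OF True] assms by (simp add: Xf_def)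
  then have "real (fst s) powr p \<le> Xf B s powr p" using assms by (intro powr_mono2) auto
  moreover have "0 \<le> Xf B s powr p" by simp
  moreover have "Wr p B s = real (fst s) powr p" using True by (simp add: Wr_def)
  ultimately show ?thesis by linarith
qed (simp add: Wr_def)

lemma ennreal_cancel:
  fixes a b c e :: ennreal
  assumes "a + b \<le> c + e" "e \<le> b" "b < \<infinity>"
  shows "a \<le> c"
proof -
  have h: "c + e \<le> c + b" by (rule add_left_mono[OF assms(2)])
  have "a + b \<le> c + b" using assms(1) h by (rule order_trans)
  then have "b + a \<le> b + c" by (simp add: add.commute)
  then show ?thesis using assms(3) by (auto simp: ennreal_add_left_cancel_le)
qed

context kern2 begin

lemma drift:
  fixes B :: real and s :: "nat \<times> nat" and y0 :: nat
  assumes B: "1 \<le> B" and na: "\<not> absb (fst s) (snd s)" and d1: "1 \<le> dd s"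
    and y0: "y0 \<le> dd s" 
    and cond: "2 powr (p - 1) * mom \<le> real y0 * measure mu {y0} * (1 + 2 * real (dd s))"
  shows "Pop mu (\<lambda>s. ennreal (Wr p B s)) s \<le> ennreal (Wr p B s)"
proof -
  let ?X = "Xf B s" and ?d = "dd s" and ?M = "mx s"
  let ?c1 = "p / 2 powr (p - 1)"
  have X1: "1 \<le> ?X" using B by (simp add: Xf_def)
  have dM: "?d \<le> ?M" by (rule dd_le_mx)
  have Wrs: "Wr p B s = 2 * ?X powr p" using na by (simp add: Wr_def)
  define g where "g y = (if y \<le> ?d then real y else 0)" for y :: nat
  define hh where "hh y = (if ?d < y then (1 + 2 * real y) powr p else 0)" for y :: nat
  have pw: "Wr p B (stp s y) + 2 * ?c1 * ?X powr (p - 1) * g y \<le> 2 * ?X powr p + 2 * p * ?X powr (p - 1) * hh y" for y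
  proof -
    consider "y < ?d" | "y = ?d" | "?d < y" by linarith
    then show ?thesis
    proof cases
      case 1
      have st: "mx (stp s y) = ?M \<and> dd (stp s y) = ?d - y" using stp_lt[OF 1] .
      have nab: "\<not> absb (fst (stp s y)) (snd (stp s y))"
        using abs_mx[of "stp s y"] st 1 by auto
      have Xs: "Xf B (stp s y) = ?X - real y" using st 1 by (simp add: Xf_def of_nat_diff)
      have "(?X - real y) powr p + ?c1 * ?X powr (p - 1) * real y \<le> ?X powr p"
        using p1 X1 dM 1 B by (intro decr_bound) (auto simp: Xf_def)
      then show ?thesis using nab Xs 1 by (simp add: Wr_def g_def hh_def)
    next
      case 2
      have st: "fst (stp s y) = ?M \<and> snd (stp s y) = ?M" using stp_eq[OF 2] .
      have Ws: "Wr p B (stp s y) \<le> 2 * (?X - real y) powr p"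
      proof -
        have ab: "absb (fst (stp s y)) (snd (stp s y))" using st 2 d1 dM unfolding absb_def by linarith
        have "Wr p B (stp s y) \<le> real ?M powr p" using ab st unfolding Wr_def by simp
        also have "\<dots> \<le> (?X - real y) powr p" using 2 B p1 by (intro powr_mono2) (auto simp: Xf_def)
        also have "\<dots> \<le> 2 * (?X - real y) powr p" by simp
        finally show ?thesis .
      qed
      have "(?X - real y) powr p + ?c1 * ?X powr (p - 1) * real y \<le> ?X powr p"
        using p1 X1 dM 2 B by (intro decr_bound) (auto simp: Xf_def)
      then show ?thesis using Ws 2 by (simp add: g_def hh_def)
    next
      case 3
      have st: "mx (stp s y) = ?M + (y - ?d) \<and> dd (stp s y) = y - ?d" using stp_gt[OF 3] .
      have "Wr p B (stp s y) \<le> 2 * Xf B (stp s y) powr p"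
        using Wr_le[of B p "stp s y"] B p1 by simp
      also have "Xf B (stp s y) powr p \<le> ?X powr p + p * ?X powr (p - 1) * (1 + 2 * real y) powr p"
        using st 3 X1 B p1 by (intro pt_bound2) (auto simp: Xf_def of_nat_diff)
      finally show ?thesis using 3 by (simp add: g_def hh_def algebra_simps)
    qed
  qed
  have c1: "0 \<le> ?c1" using p1 by simp
  have Xp: "0 \<le> ?X powr (p - 1)" by simp
  have nn: "0 \<le> 2 * ?c1 * ?X powr (p - 1)" by (intro mult_nonneg_nonneg c1 Xp) simp
  have "Pop mu (\<lambda>s. ennreal (Wr p B s)) s + ennreal (2 * ?c1 * ?X powr (p - 1)) * \<integral>\<^sup>+y. ennreal (g y) \<partial>mu
      = \<integral>\<^sup>+y. ennreal (Wr p B (stp s y)) + ennreal (2 * ?c1 * ?X powr (p - 1)) * ennreal (g y) \<partial>mu"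
    using na by (simp add: Pop_def nn_integral_add nn_integral_cmult meas_any)
  also have "\<dots> \<le> \<integral>\<^sup>+y. ennreal (2 * ?X powr p) + ennreal (2 * p * ?X powr (p - 1)) * ennreal (hh y) \<partial>mu"
  proof (intro nn_integral_mono)
    fix y
    have g0: "0 \<le> g y" and h0: "0 \<le> hh y" by (auto simp: g_def hh_def)
    have W0: "0 \<le> Wr p B (stp s y)" by (simp add: Wr_def Xf_def)
    show "ennreal (Wr p B (stp s y)) + ennreal (2 * ?c1 * ?X powr (p - 1)) * ennreal (g y)
        \<le> ennreal (2 * ?X powr p) + ennreal (2 * p * ?X powr (p - 1)) * ennreal (hh y)"
      using pw[of y] g0 h0 W0 c1 Xp p1
      by (simp add: ennreal_plus[symmetric] ennreal_mult[symmetric] del: ennreal_plus ennreal_mult' ennreal_mult'' )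
  qed
  also have "\<dots> = ennreal (2 * ?X powr p) + ennreal (2 * p * ?X powr (p - 1)) * \<integral>\<^sup>+y. ennreal (hh y) \<partial>mu"
    by (simp add: nn_integral_add nn_integral_cmult meas_any emeasure_space_1)
  finally have main: "Pop mu (\<lambda>s. ennreal (Wr p B s)) s + ennreal (2 * ?c1 * ?X powr (p - 1)) * \<integral>\<^sup>+y. ennreal (g y) \<partial>mu
      \<le> ennreal (2 * ?X powr p) + ennreal (2 * p * ?X powr (p - 1)) * \<integral>\<^sup>+y. ennreal (hh y) \<partial>mu" .
  have gl: "ennreal (real y0 * measure mu {y0}) \<le> \<integral>\<^sup>+y. ennreal (g y) \<partial>mu"
  proof -
    have "ennreal (real y0 * measure mu {y0}) = \<integral>\<^sup>+x. ennreal (real y0) * indicator {y0} x \<partial>mu"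
      by (subst nn_integral_cmult_indicator) (auto simp: sets_mu emeasure_eq_measure ennreal_mult)
    also have "\<dots> \<le> \<integral>\<^sup>+y. ennreal (g y) \<partial>mu"
      using y0 by (intro nn_integral_mono) (auto simp: g_def split: split_indicator)
    finally show ?thesis .
  qed
  have hl: "\<integral>\<^sup>+y. ennreal (hh y) \<partial>mu \<le> ennreal (mom / (1 + 2 * real ?d))"
  proof -
    have "\<integral>\<^sup>+y. ennreal (hh y) \<partial>mu \<le> \<integral>\<^sup>+y. ennreal (1 / (1 + 2 * real ?d)) * ennreal ((1 + 2 * real y) powr (p + 1)) \<partial>mu"
    proof (intro nn_integral_mono)
      fix y
      show "ennreal (hh y) \<le> ennreal (1 / (1 + 2 * real ?d)) * ennreal ((1 + 2 * real y) powr (p + 1))"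
      proof (cases "?d < y")
        case True
        have "(1 + 2 * real y) powr p * (1 + 2 * real ?d) \<le> (1 + 2 * real y) powr p * (1 + 2 * real y)"
          using True by (intro mult_left_mono) auto
        also have "\<dots> = (1 + 2 * real y) powr (p + 1)" by (simp add: powr_add)
        finally have "(1 + 2 * real y) powr p \<le> 1 / (1 + 2 * real ?d) * (1 + 2 * real y) powr (p + 1)"
          by (simp add: field_simps)
        then show ?thesis using True by (simp add: hh_def ennreal_mult[symmetric] ennreal_leI)
      qed (simp add: hh_def)
    qed
    also have "\<dots> = ennreal (1 / (1 + 2 * real ?d)) * ennreal mom"
      by (simp add: nn_integral_cmult meas_any mom_eq)
    also have "\<dots> = ennreal (mom / (1 + 2 * real ?d))"
      using mom_nonneg by (simp add: ennreal_mult[symmetric] divide_inverse mult.commute)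
    finally show ?thesis .
  qed
  have keyr: "2 * p * ?X powr (p - 1) * (mom / (1 + 2 * real ?d)) \<le> 2 * ?c1 * ?X powr (p - 1) * (real y0 * measure mu {y0})"
  proof -
    have dpos: "0 < 1 + 2 * real ?d" and ppos: "0 < 2 powr (p - 1)" by auto
    have "mom / (1 + 2 * real ?d) = (2 powr (p - 1) * mom) / (2 powr (p - 1) * (1 + 2 * real ?d))"
      using ppos by simp
    also have "\<dots> \<le> (real y0 * measure mu {y0} * (1 + 2 * real ?d)) / (2 powr (p - 1) * (1 + 2 * real ?d))"
      using dpos ppos cond by (intro divide_right_mono) auto
    also have "\<dots> = real y0 * measure mu {y0} / 2 powr (p - 1)" using dpos by simp
    finally have "mom / (1 + 2 * real ?d) \<le> real y0 * measure mu {y0} / 2 powr (p - 1)" .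
    then have "p * (mom / (1 + 2 * real ?d)) \<le> p * (real y0 * measure mu {y0} / 2 powr (p - 1))"
      using p1 by (intro mult_left_mono) auto
    then have "2 * ?X powr (p - 1) * (p * (mom / (1 + 2 * real ?d))) \<le> 2 * ?X powr (p - 1) * (p * (real y0 * measure mu {y0} / 2 powr (p - 1)))"
      by (rule mult_left_mono) auto
    then show ?thesis by (simp add: field_simps)
  qed
  have "ennreal (2 * p * ?X powr (p - 1)) * \<integral>\<^sup>+y. ennreal (hh y) \<partial>mu \<le> ennreal (2 * p * ?X powr (p - 1)) * ennreal (mom / (1 + 2 * real ?d))"
    by (intro mult_left_mono hl) auto
  also have "\<dots> = ennreal (2 * p * ?X powr (p - 1) * (mom / (1 + 2 * real ?d)))"
    using p1 mom_nonneg by (simp add: ennreal_mult[symmetric])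
  also have "\<dots> \<le> ennreal (2 * ?c1 * ?X powr (p - 1) * (real y0 * measure mu {y0}))"
    by (intro ennreal_leI keyr)
  also have "\<dots> = ennreal (2 * ?c1 * ?X powr (p - 1)) * ennreal (real y0 * measure mu {y0})"
    by (rule ennreal_mult[OF nn]) simp
  also have "\<dots> \<le> ennreal (2 * ?c1 * ?X powr (p - 1)) * \<integral>\<^sup>+y. ennreal (g y) \<partial>mu"
    by (intro mult_left_mono gl) auto
  finally have bl: "ennreal (2 * p * ?X powr (p - 1)) * \<integral>\<^sup>+y. ennreal (hh y) \<partial>mu
      \<le> ennreal (2 * ?c1 * ?X powr (p - 1)) * \<integral>\<^sup>+y. ennreal (g y) \<partial>mu" .
  have fin: "ennreal (2 * ?c1 * ?X powr (p - 1)) * \<integral>\<^sup>+y. ennreal (g y) \<partial>mu < \<infinity>"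
  proof -
    have "\<integral>\<^sup>+y. ennreal (g y) \<partial>mu \<le> \<integral>\<^sup>+y. ennreal (real ?d) \<partial>mu"
      by (intro nn_integral_mono) (auto simp: g_def)
    also have "\<dots> < \<infinity>" by (simp add: emeasure_space_1)
    finally show ?thesis by (simp add: ennreal_mult_less_top)
  qed
  from main bl fin show ?thesis unfolding Wrs by (rule ennreal_cancel)
qed

end

context kern2 begin

lemma small_region:
  fixes B \<alpha> \<delta> K :: real and r :: nat and s :: "nat \<times> nat"
  assumes B: "1 \<le> B" and na: "\<not> absb (fst s) (snd s)" and dK: "real (dd s) \<le> K"
    and a: "0 \<le> \<alpha>" and Phi: "\<And>s. (Pop mu ^^ r) (\<lambda>s. ennreal (Xf B s powr p)) s
           \<le> ennreal (Xf B s powr p + \<alpha> * Xf B s powr (p - 1))"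
    and del: "ennreal \<delta> \<le> (Pop mu ^^ r) (fM (mx s)) s" and dpos: "0 < \<delta>"
    and Bcond: "2 * \<alpha> * (1 + K) powr (p - 1) \<le> \<delta> * B"
  shows "(Pop mu ^^ r) (\<lambda>s. ennreal (Wr p B s)) s \<le> ennreal (Wr p B s)"
proof -
  let ?M = "mx s" and ?X = "Xf B s"
  let ?Q = "(real ?M + B) powr p"
  have K0: "0 \<le> K" using dK by (metis of_nat_0_le_iff order_trans)
  have pw: "ennreal (Wr p B s') + ennreal ?Q * fM ?M s' \<le> ennreal 2 * ennreal (Xf B s' powr p)" for s'
  proof (cases "absb (fst s') (snd s') \<and> ?M \<le> fst s'")
    case True
    have am: "dd s' = 0 \<and> mx s' = fst s'" using abs_mx True by blast
    have Xs: "Xf B s' = real (fst s') + B" using am by (simp add: Xf_def)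
    have "real (fst s') powr p \<le> (real (fst s') + B) powr p" using B p1 by (intro powr_mono2) auto
    moreover have "?Q \<le> (real (fst s') + B) powr p" using True B p1 by (intro powr_mono2) auto
    ultimately have "real (fst s') powr p + ?Q \<le> 2 * Xf B s' powr p" using Xs by simp
    then have "ennreal (real (fst s') powr p + ?Q) \<le> ennreal (2 * Xf B s' powr p)" by (rule ennreal_leI)
    then show ?thesis using True
      by (simp add: Wr_def fM_def ennreal_plus[symmetric] ennreal_mult del: ennreal_plus)
  next
    case False
    have "Wr p B s' \<le> 2 * Xf B s' powr p" using Wr_le[of B p s'] B p1 by simp
    then have "ennreal (Wr p B s') \<le> ennreal (2 * Xf B s' powr p)" by (rule ennreal_leI)
    moreover have "fM ?M s' = 0" using False by (simp add: fM_def)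
    ultimately show ?thesis by (simp add: ennreal_mult)
  qed
  have "(Pop mu ^^ r) (\<lambda>s. ennreal (Wr p B s)) s + ennreal ?Q * (Pop mu ^^ r) (fM ?M) s
      = (Pop mu ^^ r) (\<lambda>s'. ennreal (Wr p B s') + ennreal ?Q * fM ?M s') s"
    by (simp add: Pow_add Pow_cmult)
  also have "\<dots> \<le> (Pop mu ^^ r) (\<lambda>s'. ennreal 2 * ennreal (Xf B s' powr p)) s"
    by (intro Pow_mono pw)
  also have "\<dots> = ennreal 2 * (Pop mu ^^ r) (\<lambda>s'. ennreal (Xf B s' powr p)) s"
    by (rule Pow_cmult)
  also have "\<dots> \<le> ennreal 2 * ennreal (?X powr p + \<alpha> * ?X powr (p - 1))"
    by (intro mult_left_mono Phi) auto
  also have "\<dots> = ennreal (2 * ?X powr p) + ennreal (2 * \<alpha> * ?X powr (p - 1))"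
  proof -
    have "ennreal 2 * ennreal (?X powr p + \<alpha> * ?X powr (p - 1)) = ennreal (2 * (?X powr p + \<alpha> * ?X powr (p - 1)))"
      by (rule ennreal_mult[symmetric]) (use a in auto)
    also have "\<dots> = ennreal (2 * ?X powr p + 2 * \<alpha> * ?X powr (p - 1))" by (simp add: algebra_simps)
    also have "\<dots> = ennreal (2 * ?X powr p) + ennreal (2 * \<alpha> * ?X powr (p - 1))"
      by (rule ennreal_plus) (use a in auto)
    finally show ?thesis .
  qed
  finally have main: "(Pop mu ^^ r) (\<lambda>s. ennreal (Wr p B s)) s + ennreal ?Q * (Pop mu ^^ r) (fM ?M) s
      \<le> ennreal (2 * ?X powr p) + ennreal (2 * \<alpha> * ?X powr (p - 1))" .
  have MB: "1 \<le> real ?M + B" using B by simp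
  have XMB: "?X \<le> (1 + K) * (real ?M + B)"
  proof -
    have "?X \<le> real ?M + B + K" using dK by (simp add: Xf_def)
    also have "\<dots> \<le> (1 + K) * (real ?M + B)" using MB K0 mult_left_mono[OF MB K0] by (simp add: algebra_simps)
    finally show ?thesis .
  qed
  have rq: "2 * \<alpha> * ?X powr (p - 1) \<le> ?Q * \<delta>"
  proof -
    have X0: "0 < ?X" using B by (simp add: Xf_def add_nonneg_pos)
    have "?X powr (p - 1) \<le> ((1 + K) * (real ?M + B)) powr (p - 1)"
      using XMB X0 p1 by (intro powr_mono2) auto
    also have "\<dots> = (1 + K) powr (p - 1) * (real ?M + B) powr (p - 1)"
      using K0 MB by (simp add: powr_mult)
    finally have x1: "?X powr (p - 1) \<le> (1 + K) powr (p - 1) * (real ?M + B) powr (p - 1)" .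
    have "2 * \<alpha> * ?X powr (p - 1) \<le> 2 * \<alpha> * ((1 + K) powr (p - 1) * (real ?M + B) powr (p - 1))"
      using x1 a by (intro mult_left_mono) auto
    also have "\<dots> = (2 * \<alpha> * (1 + K) powr (p - 1)) * (real ?M + B) powr (p - 1)" by simp
    also have "\<dots> \<le> (\<delta> * B) * (real ?M + B) powr (p - 1)"
      using Bcond by (intro mult_right_mono) auto
    also have "\<dots> \<le> (\<delta> * (real ?M + B)) * (real ?M + B) powr (p - 1)"
      using dpos by (intro mult_right_mono) auto
    also have "\<dots> = \<delta> * ((real ?M + B) * (real ?M + B) powr (p - 1))" by simp
    also have "(real ?M + B) * (real ?M + B) powr (p - 1) = ?Q"
      using MB by (simp add: powr_mult_base)
    finally show ?thesis by (simp add: mult.commute)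
  qed
  have "ennreal (2 * \<alpha> * ?X powr (p - 1)) \<le> ennreal (?Q * \<delta>)" by (intro ennreal_leI rq)
  also have "\<dots> = ennreal ?Q * ennreal \<delta>" using dpos by (simp add: ennreal_mult)
  also have "\<dots> \<le> ennreal ?Q * (Pop mu ^^ r) (fM ?M) s" by (intro mult_left_mono del) auto
  finally have bl: "ennreal (2 * \<alpha> * ?X powr (p - 1)) \<le> ennreal ?Q * (Pop mu ^^ r) (fM ?M) s" .
  have fin: "ennreal ?Q * (Pop mu ^^ r) (fM ?M) s < \<infinity>"
  proof -
    have "(Pop mu ^^ r) (fM ?M) s \<le> (Pop mu ^^ r) (\<lambda>_. 1) s" by (intro Pow_mono) (simp add: fM_def)
    also have "(Pop mu ^^ r) (\<lambda>_. 1) s = 1"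
    proof (induction r arbitrary: s)
      case (Suc r) then show ?case by (simp add: Pop_def emeasure_space_1 del: funpow.simps) (simp add: Pop_def emeasure_space_1)
    qed simp
    finally have le1: "(Pop mu ^^ r) (fM ?M) s \<le> 1" .
    have "(Pop mu ^^ r) (fM ?M) s < \<infinity>" by (rule le_less_trans[OF le1]) simp
    then show ?thesis by (simp add: ennreal_mult_less_top)
  qed
  from main bl fin have "(Pop mu ^^ r) (\<lambda>s. ennreal (Wr p B s)) s \<le> ennreal (2 * ?X powr p)"
    by (rule ennreal_cancel)
  then show ?thesis using na by (simp add: Wr_def)
qed

end

definition good :: "nat \<Rightarrow> nat \<times> nat \<Rightarrow> bool" where
  "good h s \<longleftrightarrow> h dvd fst s \<and> h dvd snd s"

lemma good_stp: "good h s \<Longrightarrow> h dvd y \<Longrightarrow> good h (stp s y)"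
  by (cases s) (auto simp: good_def)

context kern begin

lemma Pow_incr:
  assumes V: "\<And>s. V s \<le> Pop mu V s"
  shows "m \<le> m' \<Longrightarrow> (Pop mu ^^ m) V s \<le> (Pop mu ^^ m') V s"
proof (induction m' arbitrary: s)
  case 0 then show ?case by simp
next
  case (Suc m')
  show ?case
  proof (cases "m = Suc m'")
    case True then show ?thesis by simp
  next
    case False
    then have "(Pop mu ^^ m) V s \<le> (Pop mu ^^ m') V s" using Suc by simp
    also have "\<dots> \<le> (Pop mu ^^ m') (Pop mu V) s" by (intro Pow_mono V)
    also have "\<dots> = (Pop mu ^^ Suc m') V s" by (simp only: funpow_Suc_right comp_def)
    finally show ?thesis .
  qed
qed

lemma Q_argument:
  fixes V W :: "nat \<times> nat \<Rightarrow> ennreal" and kf :: "nat \<times> nat \<Rightarrow> nat"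
  assumes AEh: "AE y in mu. h dvd y"
    and k1: "\<And>s. 1 \<le> kf s"
    and QW: "\<And>s. good h s \<Longrightarrow> (Pop mu ^^ kf s) W s \<le> W s"
    and VW: "\<And>s. good h s \<Longrightarrow> V s \<le> W s"
    and VP: "\<And>s. V s \<le> Pop mu V s"
    and gs: "good h s"
  shows "(Pop mu ^^ n) V s \<le> W s"
proof -
  define Q where "Q f s = (Pop mu ^^ kf s) f s" for f and s :: "nat \<times> nat"
  have mg: "(\<And>s. good h s \<Longrightarrow> f s \<le> g s) \<Longrightarrow> good h s \<Longrightarrow> (Pop mu ^^ k) f s \<le> (Pop mu ^^ k) g s"
    for f g s k using Pow_mono_good[OF AEh, of "good h" f g s k] good_stp by blast
  have B: "good h s \<Longrightarrow> (Q ^^ n) V s \<le> W s" for n s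
  proof (induction n arbitrary: s)
    case 0 then show ?case using VW by simp
  next
    case (Suc n)
    have "(Q ^^ Suc n) V s = (Pop mu ^^ kf s) ((Q ^^ n) V) s" by (simp add: Q_def)
    also have "\<dots> \<le> (Pop mu ^^ kf s) W s" by (intro mg Suc.IH Suc.prems)
    also have "\<dots> \<le> W s" by (intro QW Suc.prems)
    finally show ?case .
  qed
  have A: "good h s \<Longrightarrow> (Pop mu ^^ n) V s \<le> (Q ^^ n) V s" for n s
  proof (induction n arbitrary: s)
    case 0 then show ?case by simp
  next
    case (Suc n)
    have "(Pop mu ^^ Suc n) V s \<le> (Pop mu ^^ (kf s + n)) V s"
      using k1[of s] by (intro Pow_incr VP) simp
    also have "\<dots> = (Pop mu ^^ kf s) ((Pop mu ^^ n) V) s" by (simp add: funpow_add)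
    also have "\<dots> \<le> (Pop mu ^^ kf s) ((Q ^^ n) V) s" by (intro mg Suc.IH Suc.prems)
    also have "\<dots> = (Q ^^ Suc n) V s" by (simp add: Q_def)
    finally show ?case .
  qed
  show ?thesis using A[OF gs] B[OF gs] by (rule order_trans)
qed

end

definition Vf :: "real \<Rightarrow> nat \<times> nat \<Rightarrow> ennreal" where
  "Vf p s = ennreal (real (max (mx s) 1) powr p)"

lemma prod_list_pos': "(\<forall>y\<in>set xs. 0 < (f y::real)) \<Longrightarrow> 0 < prod_list (map f xs)"
  by (induction xs) auto

context kern begin
lemma prod_meas:
  "ennreal (prod_list (map (\<lambda>y. measure mu {y}) S)) = prod_list (map (\<lambda>y. emeasure mu {y}) S)"
proof (induction S)
  case Nil then show ?case by simp
next
  case (Cons y S)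
  have "0 \<le> prod_list (map (\<lambda>y. measure mu {y}) S)" by (induction S) auto
  then show ?case using Cons
    by (simp add: ennreal_mult emeasure_eq_measure del: ennreal_mult' ennreal_mult'')
qed
end

locale kern3 = kern2 mu p for mu :: "nat measure" and p :: real +
  fixes h y0 :: nat
  assumes AEh: "AE y in mu. h dvd y"
    and y0: "1 \<le> y0" "0 < measure mu {y0}"
    and bez: "\<And>d. h dvd d \<Longrightarrow> \<exists>S T. sum_list S = d + sum_list T \<and> 1 \<le> sum_list S \<and>
                 (\<forall>y\<in>set S \<union> set T. 0 < measure mu {y})"
begin

lemma lists_bounded:
  "\<exists>r \<delta>. 0 < \<delta> \<and> (\<forall>d\<le>K. h dvd d \<longrightarrow> (\<exists>S T. sum_list S = d + sum_list T \<and> 1 \<le> sum_list S \<and>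
      length S + length T \<le> r \<and> \<delta> \<le> prod_list (map (\<lambda>y. measure mu {y}) S) * prod_list (map (\<lambda>y. measure mu {y}) T)))"
proof (induction K)
  case 0
  obtain S T where ST: "sum_list S = 0 + sum_list T" "1 \<le> sum_list S" "\<forall>y\<in>set S \<union> set T. 0 < measure mu {y}"
    using bez[of 0] by auto
  have pos: "0 < prod_list (map (\<lambda>y. measure mu {y}) S) * prod_list (map (\<lambda>y. measure mu {y}) T)"
    using ST(3) by (intro mult_pos_pos prod_list_pos') auto
  show ?case
    apply (rule exI[of _ "length S + length T"], rule exI[of _ "prod_list (map (\<lambda>y. measure mu {y}) S) * prod_list (map (\<lambda>y. measure mu {y}) T)"])
  proof (intro conjI allI impI pos)
    fix d :: nat assume "d \<le> 0"
    then have "d = 0" by simp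
    then show "\<exists>Sa Ta. sum_list Sa = d + sum_list Ta \<and> 1 \<le> sum_list Sa \<and>
      length Sa + length Ta \<le> length S + length T \<and> prod_list (map (\<lambda>y. measure mu {y}) S) * prod_list (map (\<lambda>y. measure mu {y}) T) \<le> prod_list (map (\<lambda>y. measure mu {y}) Sa) * prod_list (map (\<lambda>y. measure mu {y}) Ta)"
      using ST by (intro exI[of _ S] exI[of _ T]) auto
  qed
next
  case (Suc K)
  then obtain r \<delta> where rd: "0 < \<delta>" "\<forall>d\<le>K. h dvd d \<longrightarrow> (\<exists>S T. sum_list S = d + sum_list T \<and> 1 \<le> sum_list S \<and>
      length S + length T \<le> r \<and> \<delta> \<le> prod_list (map (\<lambda>y. measure mu {y}) S) * prod_list (map (\<lambda>y. measure mu {y}) T))"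
    by blast
  show ?case
  proof (cases "h dvd Suc K")
    case False
    show ?thesis using rd False by (intro exI[of _ r] exI[of _ \<delta>]) (auto simp: le_Suc_eq)
  next
    case True
    obtain S0 T0 where ST: "sum_list S0 = Suc K + sum_list T0" "1 \<le> sum_list S0" "\<forall>y\<in>set S0 \<union> set T0. 0 < measure mu {y}"
      using bez[OF True] by auto
    define \<delta>' where "\<delta>' = prod_list (map (\<lambda>y. measure mu {y}) S0) * prod_list (map (\<lambda>y. measure mu {y}) T0)"
    have pos: "0 < \<delta>'" unfolding \<delta>'_def
      using ST(3) by (intro mult_pos_pos prod_list_pos') auto
    show ?thesis
    proof (intro exI[of _ "max r (length S0 + length T0)"] exI[of _ "min \<delta> \<delta>'"] conjI allI impI)
      show "0 < min \<delta> \<delta>'" using pos rd by simp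
      fix d assume d: "d \<le> Suc K" "h dvd d"
      show "\<exists>S T. sum_list S = d + sum_list T \<and> 1 \<le> sum_list S \<and>
          length S + length T \<le> max r (length S0 + length T0) \<and> min \<delta> \<delta>' \<le> prod_list (map (\<lambda>y. measure mu {y}) S) * prod_list (map (\<lambda>y. measure mu {y}) T)"
      proof (cases "d = Suc K")
        case True
        then show ?thesis using ST by (intro exI[of _ S0] exI[of _ T0]) (auto simp: \<delta>'_def)
      next
        case False
        then have "d \<le> K" using d by simp
        then obtain S' T' where "sum_list S' = d + sum_list T'" "1 \<le> sum_list S'"
          "length S' + length T' \<le> r" "\<delta> \<le> prod_list (map (\<lambda>y. measure mu {y}) S') * prod_list (map (\<lambda>y. measure mu {y}) T')"
          using rd d by blast
        then show ?thesis by (intro exI[of _ S'] exI[of _ T']) auto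
      qed
    qed
  qed
qed

end

lemma max1_powr_le:
  assumes p: "0 \<le> p"
  shows "real (max (max a b) 1) powr p \<le> 1 + real a powr p + real b powr p"
proof (cases "max a b = 0")
  case True then show ?thesis by simp
next
  case False
  then have "max (max a b) 1 = max a b" by (auto simp: max_def)
  moreover have "real (max a b) powr p \<le> real a powr p + real b powr p"
    by (cases "a \<le> b") (auto simp: max_def)
  ultimately show ?thesis by simp
qed

context kern3 begin

lemma VP: "Vf p s \<le> Pop mu (Vf p) s"
proof (cases "absb (fst s) (snd s)")
  case True then show ?thesis by (simp add: Pop_def)
next
  case False
  have "Vf p s = \<integral>\<^sup>+y. Vf p s \<partial>mu" by (simp add: emeasure_space_1)
  also have "\<dots> \<le> \<integral>\<^sup>+y. Vf p (stp s y) \<partial>mu"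
  proof (intro nn_integral_mono)
    fix y
    have "mx s \<le> mx (stp s y)" by (rule mx_stp)
    then have "real (max (mx s) 1) powr p \<le> real (max (mx (stp s y)) 1) powr p"
      using p1 by (intro powr_mono2) auto
    then show "Vf p s \<le> Vf p (stp s y)" unfolding Vf_def by (rule ennreal_leI)
  qed
  finally show ?thesis using False by (simp add: Pop_def)
qed

lemma VW: assumes B: "1 \<le> B" shows "Vf p s \<le> ennreal (Wr p B s)"
proof (cases "absb (fst s) (snd s)")
  case True
  then have "max (mx s) 1 = fst s" using abs_mx[OF True] by (auto simp: absb_def)
  then show ?thesis using True by (simp add: Vf_def Wr_def)
next
  case False
  have "real (max (mx s) 1) \<le> Xf B s" using B by (auto simp: Xf_def max_def)
  then have "real (max (mx s) 1) powr p \<le> Xf B s powr p" using p1 by (intro powr_mono2) auto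
  also have "\<dots> \<le> 2 * Xf B s powr p" by simp
  finally show ?thesis using False unfolding Vf_def Wr_def by (intro ennreal_leI) simp
qed

lemma Wr_final:
  assumes B: "1 \<le> B"
  shows "Wr p B s \<le> 2 * (2 + B) powr p * (1 + real (fst s) powr p + real (snd s) powr p)"
proof -
  have m1: "real (max (mx s) 1) powr p \<le> 1 + real (fst s) powr p + real (snd s) powr p"
    using max1_powr_le[of p "fst s" "snd s"] p1 by (simp add: mx_def)
  have c1: "1 \<le> 2 * (2 + B) powr p"
  proof -
    have "1 \<le> (2 + B) powr p" using B p1 by (simp add: ge_one_powr_ge_zero)
    then show ?thesis by simp
  qed
  have nn: "0 \<le> 1 + real (fst s) powr p + real (snd s) powr p" by (simp add: add_nonneg_nonneg)
  show ?thesis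
  proof (cases "absb (fst s) (snd s)")
    case True
    have "real (fst s) powr p \<le> 1 + real (fst s) powr p + real (snd s) powr p" by simp
    also have "\<dots> \<le> 2 * (2 + B) powr p * (1 + real (fst s) powr p + real (snd s) powr p)"
      using c1 nn mult_right_mono[OF c1 nn] by simp
    finally show ?thesis using True by (simp add: Wr_def)
  next
    case False
    have "Xf B s \<le> (2 + B) * real (max (mx s) 1)"
    proof -
      have "Xf B s \<le> 2 * real (mx s) + B" using dd_le_mx[of s] by (simp add: Xf_def)
      also have "\<dots> \<le> (2 + B) * real (max (mx s) 1)"
        using B by (cases "mx s = 0") (auto simp: algebra_simps max_def)
      finally show ?thesis .
    qed
    then have "Xf B s powr p \<le> ((2 + B) * real (max (mx s) 1)) powr p"
      using B p1 by (intro powr_mono2) (auto simp: Xf_def)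
    also have "\<dots> = (2 + B) powr p * real (max (mx s) 1) powr p" using B by (simp add: powr_mult)
    also have "\<dots> \<le> (2 + B) powr p * (1 + real (fst s) powr p + real (snd s) powr p)"
      using m1 by (intro mult_left_mono) auto
    finally show ?thesis using False by (simp add: Wr_def)
  qed
qed

theorem kernel_main:
  "\<exists>C. \<forall>s n. good h s \<longrightarrow> (Pop mu ^^ n) (Vf p) s \<le> ennreal (C * (1 + real (fst s) powr p + real (snd s) powr p))"
proof -
  define e0 where "e0 = real y0 * measure mu {y0}"
  have e0: "0 < e0" using y0 by (simp add: e0_def)
  define K0 where "K0 = y0 + nat \<lceil>2 powr (p - 1) * mom / e0\<rceil>"
  have K0y: "y0 \<le> K0" by (simp add: K0_def)
  have K0c: "2 powr (p - 1) * mom \<le> e0 * (1 + 2 * real K0)"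
  proof -
    have "2 powr (p - 1) * mom / e0 \<le> real K0"
      unfolding K0_def by (smt (verit) of_nat_add of_nat_0_le_iff real_nat_ceiling_ge)
    then have "2 powr (p - 1) * mom \<le> e0 * real K0" using e0 by (simp add: field_simps)
    also have "\<dots> \<le> e0 * (1 + 2 * real K0)" using e0 by (intro mult_left_mono) auto
    finally show ?thesis .
  qed
  obtain r \<delta> where dpos: "0 < \<delta>" and rd: "\<And>d. d \<le> K0 \<Longrightarrow> h dvd d \<Longrightarrow> (\<exists>S T. sum_list S = d + sum_list T \<and> 1 \<le> sum_list S \<and>
      length S + length T \<le> r \<and> \<delta> \<le> prod_list (map (\<lambda>y. measure mu {y}) S) * prod_list (map (\<lambda>y. measure mu {y}) T))"
    using lists_bounded[of K0] by blast
  define r' where "r' = max r 1"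
  obtain \<alpha> where a: "0 \<le> \<alpha>" and Phi: "\<And>B s. 1 \<le> B \<Longrightarrow> (Pop mu ^^ r') (\<lambda>s. ennreal (Xf B s powr p)) s
           \<le> ennreal (Xf B s powr p + \<alpha> * Xf B s powr (p - 1))"
    using Phi_bound[of r'] by blast
  define B where "B = max 1 (2 * \<alpha> * (1 + real K0) powr (p - 1) / \<delta>)"
  have B1: "1 \<le> B" by (simp add: B_def)
  have Bc: "2 * \<alpha> * (1 + real K0) powr (p - 1) \<le> \<delta> * B"
  proof -
    have "2 * \<alpha> * (1 + real K0) powr (p - 1) / \<delta> \<le> B" by (simp add: B_def)
    then show ?thesis using dpos by (simp add: field_simps)
  qed
  define kf where "kf s = (if dd s \<le> K0 then r' else 1)" for s
  have QW: "(Pop mu ^^ kf s) (\<lambda>s. ennreal (Wr p B s)) s \<le> ennreal (Wr p B s)" if gs: "good h s" for s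
  proof (cases "absb (fst s) (snd s)")
    case True then show ?thesis by (simp add: Pow_abs)
  next
    case na: False
    show ?thesis
    proof (cases "dd s \<le> K0")
      case True
      have hd: "h dvd dd s" using gs by (auto simp: good_def dd_def)
      obtain S T where ST: "sum_list S = dd s + sum_list T" "1 \<le> sum_list S" "length S + length T \<le> r"
        "\<delta> \<le> prod_list (map (\<lambda>y. measure mu {y}) S) * prod_list (map (\<lambda>y. measure mu {y}) T)"
        using rd[OF True hd] by blast
      have pn: "0 \<le> prod_list (map (\<lambda>y. measure mu {y}) S)" "0 \<le> prod_list (map (\<lambda>y. measure mu {y}) T)"
        by (induction S, auto, induction T, auto)
      have "ennreal \<delta> \<le> ennreal (prod_list (map (\<lambda>y. measure mu {y}) S) * prod_list (map (\<lambda>y. measure mu {y}) T))"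
        using ST(4) by (rule ennreal_leI)
      also have "\<dots> = prod_list (map (\<lambda>y. emeasure mu {y}) S) * prod_list (map (\<lambda>y. emeasure mu {y}) T)"
        using pn by (simp add: ennreal_mult prod_meas del: ennreal_mult' ennreal_mult'')
      also have "\<dots> \<le> (Pop mu ^^ r') (fM (mx s)) s"
      proof (cases "fst s \<le> snd s")
        case True
        have "prod_list (map (\<lambda>y. emeasure mu {y}) S) * prod_list (map (\<lambda>y. emeasure mu {y}) T) \<le> (Pop mu ^^ r') (fM (mx s)) (fst s, snd s)"
          using ST True by (intro path_lemma) (auto simp: dd_def mx_def r'_def)
        then show ?thesis by simp
      next
        case False
        have "prod_list (map (\<lambda>y. emeasure mu {y}) T) * prod_list (map (\<lambda>y. emeasure mu {y}) S) \<le> (Pop mu ^^ r') (fM (mx s)) (fst s, snd s)"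
          using ST False by (intro path_lemma) (auto simp: dd_def mx_def r'_def)
        then show ?thesis by (simp add: mult.commute)
      qed
      finally have del: "ennreal \<delta> \<le> (Pop mu ^^ r') (fM (mx s)) s" .
      have "(Pop mu ^^ r') (\<lambda>s. ennreal (Wr p B s)) s \<le> ennreal (Wr p B s)"
        using True by (intro small_region[where K="real K0", OF B1 na _ a Phi[OF B1] del dpos]) (auto simp: Bc)
      then show ?thesis using True by (simp add: kf_def)
    next
      case False
      have "Pop mu (\<lambda>s. ennreal (Wr p B s)) s \<le> ennreal (Wr p B s)"
      proof (rule drift[OF B1 na])
        show "1 \<le> dd s" "y0 \<le> dd s" using False K0y y0 by auto
        have "e0 * (1 + 2 * real K0) \<le> e0 * (1 + 2 * real (dd s))" using False e0 by (intro mult_left_mono) auto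
        then show "2 powr (p - 1) * mom \<le> real y0 * measure mu {y0} * (1 + 2 * real (dd s))"
          using K0c by (simp add: e0_def)
      qed
      then show ?thesis using False by (simp add: kf_def)
    qed
  qed
  have main: "(Pop mu ^^ n) (Vf p) s \<le> ennreal (Wr p B s)" if "good h s" for s n
    by (rule Q_argument[OF AEh _ QW VW[OF B1] VP that]) (auto simp: kf_def r'_def)
  show ?thesis
  proof (intro exI[of _ "2 * (2 + B) powr p"] allI impI)
    fix s n assume "good h s"
    then have "(Pop mu ^^ n) (Vf p) s \<le> ennreal (Wr p B s)" by (rule main)
    also have "\<dots> \<le> ennreal (2 * (2 + B) powr p * (1 + real (fst s) powr p + real (snd s) powr p))"
      by (intro ennreal_leI Wr_final B1)
    finally show "(Pop mu ^^ n) (Vf p) s \<le> ennreal (2 * (2 + B) powr p * (1 + real (fst s) powr p + real (snd s) powr p))" .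
  qed
qed

end

fun runZ :: "nat \<Rightarrow> nat \<times> nat \<times> nat \<times> nat \<Rightarrow> (nat + nat \<Rightarrow> nat) \<Rightarrow> nat \<times> nat \<times> nat \<times> nat" where
  "runZ 0 s z = s"
| "runZ (Suc k) (a, b, m, n) z = (if absb a b then (a, b, m, n) else if a \<le> b
     then runZ k (a + z (Inl (Suc m)), b, Suc m, n) z else runZ k (a, b + z (Inr (Suc n)), m, Suc n) z)"

definition Jset :: "nat \<Rightarrow> nat \<Rightarrow> (nat + nat) set" where
  "Jset m0 n0 = {Inl k | k. m0 < k} \<union> {Inr k | k. n0 < k}"

lemma runZ_dep:
  assumes "\<And>i. i \<in> Jset m n \<Longrightarrow> z i = z' i"
  shows "runZ k (a, b, m, n) z = runZ k (a, b, m, n) z'"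
  using assms
proof (induction k arbitrary: a b m n)
  case 0 then show ?case by simp
next
  case (Suc k)
  have z1: "z (Inl (Suc m)) = z' (Inl (Suc m))" "z (Inr (Suc n)) = z' (Inr (Suc n))"
    by (auto intro!: Suc.prems simp: Jset_def)
  have "runZ k (a + z (Inl (Suc m)), b, Suc m, n) z = runZ k (a + z (Inl (Suc m)), b, Suc m, n) z'"
    by (intro Suc.IH Suc.prems) (auto simp: Jset_def)
  moreover have "runZ k (a, b + z (Inr (Suc n)), m, Suc n) z = runZ k (a, b + z (Inr (Suc n)), m, Suc n) z'"
    by (intro Suc.IH Suc.prems) (auto simp: Jset_def)
  ultimately show ?case using z1 by simp
qed

lemma runZ_meas:
  assumes "m0 \<le> m" "n0 \<le> n"
  shows "(\<lambda>z. runZ k (a, b, m, n) z) \<in> measurable (PiM (Jset m0 n0) (\<lambda>_. count_space UNIV)) (count_space UNIV)"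
  using assms
proof (induction k arbitrary: a b m n)
  case 0 then show ?case by simp
next
  case (Suc k)
  have m1: "(\<lambda>z. z (Inl (Suc m))) \<in> measurable (PiM (Jset m0 n0) (\<lambda>_. count_space UNIV)) (count_space UNIV)"
    using Suc.prems by (intro measurable_component_singleton) (auto simp: Jset_def)
  have m2: "(\<lambda>z. z (Inr (Suc n))) \<in> measurable (PiM (Jset m0 n0) (\<lambda>_. count_space UNIV)) (count_space UNIV)"
    using Suc.prems by (intro measurable_component_singleton) (auto simp: Jset_def)
  have A: "(\<lambda>z. runZ k (a + z (Inl (Suc m)), b, Suc m, n) z) \<in> measurable (PiM (Jset m0 n0) (\<lambda>_. count_space UNIV)) (count_space UNIV)"
    by (rule measurable_compose_countable'[where f="\<lambda>y z. runZ k (a + y, b, Suc m, n) z" and I=UNIV, OF _ m1])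
       (use Suc in auto)
  have B: "(\<lambda>z. runZ k (a, b + z (Inr (Suc n)), m, Suc n) z) \<in> measurable (PiM (Jset m0 n0) (\<lambda>_. count_space UNIV)) (count_space UNIV)"
    by (rule measurable_compose_countable'[where f="\<lambda>y z. runZ k (a, b + y, m, Suc n) z" and I=UNIV, OF _ m2])
       (use Suc in auto)
  show ?case using A B by simp
qed

context prob_space begin

lemma indep_integral:
  fixes X :: "'i \<Rightarrow> 'a \<Rightarrow> nat" and G :: "nat \<Rightarrow> ('i \<Rightarrow> nat) \<Rightarrow> ennreal"
  assumes ind: "indep_vars (\<lambda>_. count_space UNIV) X I"
    and i0: "i0 \<in> I" and J: "J \<subseteq> I" "i0 \<notin> J"
    and Gm: "\<And>y. G y \<in> borel_measurable (PiM J (\<lambda>_. count_space UNIV))"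
  shows "(\<integral>\<^sup>+\<omega>. G (X i0 \<omega>) (restrict (\<lambda>i. X i \<omega>) J) \<partial>M)
       = (\<integral>\<^sup>+y. (\<integral>\<^sup>+\<omega>. G y (restrict (\<lambda>i. X i \<omega>) J) \<partial>M) \<partial>distr M (count_space UNIV) (X i0))"
proof -
  let ?PJ = "PiM J (\<lambda>_. count_space UNIV) :: ('i \<Rightarrow> nat) measure"
  let ?Z = "\<lambda>\<omega>. restrict (\<lambda>i. X i \<omega>) J"
  have iv: "indep_var (PiM {i0} (\<lambda>_. count_space UNIV)) (\<lambda>\<omega>. restrict (\<lambda>i. X i \<omega>) {i0}) ?PJ ?Z"
    using J i0 by (intro indep_var_restrict[OF ind]) auto
  let ?P1 = "PiM {i0} (\<lambda>_. count_space UNIV) :: ('i \<Rightarrow> nat) measure"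
  let ?R = "\<lambda>\<omega>. restrict (\<lambda>i. X i \<omega>) {i0}"
  have Rm: "?R \<in> measurable M ?P1" and Zm: "?Z \<in> measurable M ?PJ"
    using iv by (auto dest: indep_var_rv1 indep_var_rv2)
  have Xm: "X i0 \<in> measurable M (count_space UNIV)"
    using ind i0 by (auto simp: indep_vars_def)
  have deq: "distr M ?P1 ?R \<Otimes>\<^sub>M distr M ?PJ ?Z = distr M (?P1 \<Otimes>\<^sub>M ?PJ) (\<lambda>x. (?R x, ?Z x))"
    using iv by (simp add: indep_var_distribution_eq)
  have Gm2: "case_prod G \<in> borel_measurable (count_space UNIV \<Otimes>\<^sub>M ?PJ)"
    by (rule measurable_pair_measure_countable1) (auto intro: Gm)
  have Gm3: "(\<lambda>(f, z). G (f i0) z) \<in> borel_measurable (?P1 \<Otimes>\<^sub>M ?PJ)"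
  proof -
    have "(\<lambda>x. (fst x i0, snd x)) \<in> measurable (?P1 \<Otimes>\<^sub>M ?PJ) (count_space UNIV \<Otimes>\<^sub>M ?PJ)"
      by (intro measurable_Pair measurable_compose[OF measurable_fst measurable_component_singleton]) auto
    from measurable_compose[OF this Gm2] show ?thesis by (simp add: case_prod_beta')
  qed
  have Gm4: "(\<lambda>f. H (f i0)) \<in> borel_measurable ?P1" for H :: "nat \<Rightarrow> ennreal"
    by (rule measurable_compose[OF measurable_component_singleton]) auto
  interpret Zs: prob_space "distr M ?PJ ?Z" by (rule prob_space_distr[OF Zm])
  have "(\<integral>\<^sup>+\<omega>. G (X i0 \<omega>) (?Z \<omega>) \<partial>M) = integral\<^sup>N (distr M (?P1 \<Otimes>\<^sub>M ?PJ) (\<lambda>x. (?R x, ?Z x))) (\<lambda>(f, z). G (f i0) z)"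
    by (subst nn_integral_distr) (auto intro!: measurable_Pair Rm Zm Gm3)
  also have "\<dots> = integral\<^sup>N (distr M ?P1 ?R \<Otimes>\<^sub>M distr M ?PJ ?Z) (\<lambda>(f, z). G (f i0) z)"
    by (simp add: deq)
  also have "\<dots> = (\<integral>\<^sup>+f. (\<integral>\<^sup>+z. G (f i0) z \<partial>distr M ?PJ ?Z) \<partial>distr M ?P1 ?R)"
  proof -
    have "sets (distr M ?P1 ?R \<Otimes>\<^sub>M distr M ?PJ ?Z) = sets (?P1 \<Otimes>\<^sub>M ?PJ)"
      by (rule sets_pair_measure_cong) simp_all
    then have eq: "borel_measurable (distr M ?P1 ?R \<Otimes>\<^sub>M distr M ?PJ ?Z) = borel_measurable (?P1 \<Otimes>\<^sub>M ?PJ)"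
      by (rule measurable_cong_sets[OF _ refl])
    have "(\<lambda>(f, z). G (f i0) z) \<in> borel_measurable (distr M ?P1 ?R \<Otimes>\<^sub>M distr M ?PJ ?Z)"
      unfolding eq by (rule Gm3)
    then show ?thesis by (subst Zs.nn_integral_fst[symmetric]) auto
  qed
  also have "\<dots> = (\<integral>\<^sup>+\<omega>. (\<integral>\<^sup>+z. G (X i0 \<omega>) z \<partial>distr M ?PJ ?Z) \<partial>M)"
    by (subst nn_integral_distr[OF Rm]) (auto intro: Gm4[of "\<lambda>y. \<integral>\<^sup>+z. G y z \<partial>distr M ?PJ ?Z"])
  also have "\<dots> = (\<integral>\<^sup>+y. (\<integral>\<^sup>+z. G y z \<partial>distr M ?PJ ?Z) \<partial>distr M (count_space UNIV) (X i0))"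
    by (subst nn_integral_distr[OF Xm]) auto
  also have "\<dots> = (\<integral>\<^sup>+y. (\<integral>\<^sup>+\<omega>. G y (?Z \<omega>) \<partial>M) \<partial>distr M (count_space UNIV) (X i0))"
    by (intro nn_integral_cong) (auto intro!: nn_integral_distr Zm Gm)
  finally show ?thesis .
qed

end

definition posf :: "nat \<times> nat \<times> nat \<times> nat \<Rightarrow> nat \<times> nat" where
  "posf s = (fst s, fst (snd s))"

definition IS :: "(nat + nat) set" where "IS = {Inl k | k. k \<ge> 1} \<union> {Inr k | k. k \<ge> 1}"

locale setting = prob_space M for M :: "'a measure" +
  fixes Y Yt :: "nat \<Rightarrow> 'a \<Rightarrow> nat" and mu :: "nat measure"
  assumes ind: "indep_vars (\<lambda>_. count_space UNIV) (\<lambda>x. case x of Inl k \<Rightarrow> Y k | Inr k \<Rightarrow> Yt k) IS"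
    and dY: "\<And>k. k \<ge> 1 \<Longrightarrow> distr M (count_space UNIV) (Y k) = mu"
    and dYt: "\<And>k. k \<ge> 1 \<Longrightarrow> distr M (count_space UNIV) (Yt k) = mu"
    and kmu: "kern mu"
begin

abbreviation XX where "XX \<equiv> (\<lambda>x. case x of Inl k \<Rightarrow> Y k | Inr k \<Rightarrow> Yt k)"

definition fam :: "'a \<Rightarrow> nat + nat \<Rightarrow> nat" where "fam \<omega> = (\<lambda>i. XX i \<omega>)"

lemma J_sub: "Jset m n \<subseteq> IS" by (auto simp: Jset_def IS_def)

lemma step_integral:
  fixes g :: "nat \<Rightarrow> nat \<times> nat"
  assumes i0: "i0 \<in> IS" "i0 \<notin> Jset m n" and dm: "distr M (count_space UNIV) (XX i0) = mu"
  shows "(\<integral>\<^sup>+\<omega>. Vf p (posf (runZ k (fst (g (XX i0 \<omega>)), snd (g (XX i0 \<omega>)), m, n) (fam \<omega>))) \<partial>M)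
       = (\<integral>\<^sup>+y. (\<integral>\<^sup>+\<omega>. Vf p (posf (runZ k (fst (g y), snd (g y), m, n) (fam \<omega>))) \<partial>M) \<partial>mu)"
proof -
  define G where "G y z = Vf p (posf (runZ k (fst (g y), snd (g y), m, n) z))" for y z
  have Gr: "G y (fam \<omega>) = G y (restrict (\<lambda>i. XX i \<omega>) (Jset m n))" for y \<omega>
    unfolding G_def by (subst runZ_dep[of m n "fam \<omega>" "restrict (\<lambda>i. XX i \<omega>) (Jset m n)"]) (auto simp: fam_def)
  have Gm: "G y \<in> borel_measurable (PiM (Jset m n) (\<lambda>_. count_space UNIV))" for y
    unfolding G_def by (rule measurable_compose[OF runZ_meas]) auto
  have "(\<integral>\<^sup>+\<omega>. G (XX i0 \<omega>) (fam \<omega>) \<partial>M) = (\<integral>\<^sup>+\<omega>. G (XX i0 \<omega>) (restrict (\<lambda>i. XX i \<omega>) (Jset m n)) \<partial>M)"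
    by (simp add: Gr)
  also have "\<dots> = (\<integral>\<^sup>+y. (\<integral>\<^sup>+\<omega>. G y (restrict (\<lambda>i. XX i \<omega>) (Jset m n)) \<partial>M) \<partial>distr M (count_space UNIV) (XX i0))"
    by (rule indep_integral[OF ind i0(1) J_sub i0(2) Gm])
  also have "\<dots> = (\<integral>\<^sup>+y. (\<integral>\<^sup>+\<omega>. G y (fam \<omega>) \<partial>M) \<partial>mu)"
    by (simp add: Gr dm)
  finally show ?thesis by (simp add: G_def)
qed

lemma KL: "(\<integral>\<^sup>+\<omega>. Vf p (posf (runZ k (a, b, m, n) (fam \<omega>))) \<partial>M) \<le> (Pop mu ^^ k) (Vf p) (a, b)"
proof (induction k arbitrary: a b m n)
  case 0 then show ?case by (simp add: posf_def emeasure_space_1)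
next
  case (Suc k)
  show ?case
  proof (cases "absb a b")
    case True
    then show ?thesis by (simp add: posf_def emeasure_space_1 kern.Pow_abs[OF kmu] del: funpow.simps)
  next
    case na: False
    show ?thesis
    proof (cases "a \<le> b")
      case True
      have "(\<integral>\<^sup>+\<omega>. Vf p (posf (runZ (Suc k) (a, b, m, n) (fam \<omega>))) \<partial>M)
          = (\<integral>\<^sup>+\<omega>. Vf p (posf (runZ k (fst ((\<lambda>y. (a + y, b)) (XX (Inl (Suc m)) \<omega>)), snd ((\<lambda>y. (a + y, b)) (XX (Inl (Suc m)) \<omega>)), Suc m, n) (fam \<omega>))) \<partial>M)"
        using na True by (simp add: fam_def)
      also have "\<dots> = (\<integral>\<^sup>+y. (\<integral>\<^sup>+\<omega>. Vf p (posf (runZ k (a + y, b, Suc m, n) (fam \<omega>))) \<partial>M) \<partial>mu)"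
        by (subst step_integral) (auto simp: IS_def Jset_def dY)
      also have "\<dots> \<le> (\<integral>\<^sup>+y. (Pop mu ^^ k) (Vf p) (a + y, b) \<partial>mu)"
        by (intro nn_integral_mono Suc.IH)
      also have "\<dots> = (Pop mu ^^ Suc k) (Vf p) (a, b)"
        using na True by (simp add: Pop_def)
      finally show ?thesis .
    next
      case False
      have "(\<integral>\<^sup>+\<omega>. Vf p (posf (runZ (Suc k) (a, b, m, n) (fam \<omega>))) \<partial>M)
          = (\<integral>\<^sup>+\<omega>. Vf p (posf (runZ k (fst ((\<lambda>y. (a, b + y)) (XX (Inr (Suc n)) \<omega>)), snd ((\<lambda>y. (a, b + y)) (XX (Inr (Suc n)) \<omega>)), m, Suc n) (fam \<omega>))) \<partial>M)"
        using na False by (simp add: fam_def)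
      also have "\<dots> = (\<integral>\<^sup>+y. (\<integral>\<^sup>+\<omega>. Vf p (posf (runZ k (a, b + y, m, Suc n) (fam \<omega>))) \<partial>M) \<partial>mu)"
        by (subst step_integral) (auto simp: IS_def Jset_def dYt)
      also have "\<dots> \<le> (\<integral>\<^sup>+y. (Pop mu ^^ k) (Vf p) (a, b + y) \<partial>mu)"
        by (intro nn_integral_mono Suc.IH)
      also have "\<dots> = (Pop mu ^^ Suc k) (Vf p) (a, b)"
        using na False by (simp add: Pop_def)
      finally show ?thesis .
    qed
  qed
qed

end

definition stepZ :: "nat \<times> nat \<times> nat \<times> nat \<Rightarrow> (nat + nat \<Rightarrow> nat) \<Rightarrow> nat \<times> nat \<times> nat \<times> nat" where
  "stepZ s z = (case s of (a, b, m, n) \<Rightarrow> if absb a b then (a, b, m, n) else if a \<le> b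
     then (a + z (Inl (Suc m)), b, Suc m, n) else (a, b + z (Inr (Suc n)), m, Suc n))"

lemma runZ_abs: "absb a b \<Longrightarrow> runZ k (a, b, m, n) z = (a, b, m, n)"
  by (cases k) auto

lemma runZ_step: "runZ k (stepZ s z) z = runZ (Suc k) s z"
  by (cases s) (auto simp: stepZ_def runZ_abs)

lemma runZ_Suc_right: "runZ (Suc k) s z = stepZ (runZ k s z) z"
proof (induction k arbitrary: s)
  case 0 then show ?case by (metis runZ.simps(1) runZ_step)
next
  case (Suc k)
  have "runZ (Suc (Suc k)) s z = runZ (Suc k) (stepZ s z) z" by (simp only: runZ_step)
  also have "\<dots> = stepZ (runZ k (stepZ s z) z) z" by (rule Suc.IH)
  also have "\<dots> = stepZ (runZ (Suc k) s z) z" by (simp only: runZ_step)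
  finally show ?case .
qed

lemma mx_stepZ: "mx (posf s) \<le> mx (posf (stepZ s z))"
  by (cases s) (auto simp: stepZ_def posf_def mx_def)

lemma Vf_mono: "0 \<le> p \<Longrightarrow> mx s \<le> mx s' \<Longrightarrow> Vf p s \<le> Vf p s'"
  unfolding Vf_def by (intro ennreal_leI powr_mono2) auto

lemma growth:
  assumes z: "\<And>k. 1 \<le> z (Inl (Suc k))" "\<And>k. 1 \<le> z (Inr (Suc k))"
    and na: "\<And>k. k < n \<Longrightarrow> \<not> absb (fst (runZ k s z)) (fst (snd (runZ k s z)))"
  shows "fst s + fst (snd s) + n \<le> fst (runZ n s z) + fst (snd (runZ n s z))"
  using na
proof (induction n)
  case 0 then show ?case by simp
next
  case (Suc n)
  obtain a b m k where r: "runZ n s z = (a, b, m, k)" by (cases "runZ n s z") auto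
  have "\<not> absb a b" using Suc.prems[of n] r by simp
  then have "a + b + 1 \<le> fst (stepZ (a, b, m, k) z) + fst (snd (stepZ (a, b, m, k) z))"
    using z[of m] z[of k] by (auto simp: stepZ_def)
  then show ?case using Suc r by (simp add: runZ_Suc_right)
qed

context setting begin

lemma inv:
  assumes "runZ k (i, j, 0, 0) (fam \<omega>) = (a, b, m, n)"
  shows "a = i + psum Y m \<omega> \<and> b = j + psum Yt n \<omega>"
  using assms
proof (induction k arbitrary: a b m n)
  case 0 then show ?case by (auto simp: psum_def)
next
  case (Suc k)
  obtain a' b' m' n' where r: "runZ k (i, j, 0, 0) (fam \<omega>) = (a', b', m', n')" by (cases "runZ k (i, j, 0, 0) (fam \<omega>)") auto
  have IH: "a' = i + psum Y m' \<omega> \<and> b' = j + psum Yt n' \<omega>" by (rule Suc.IH[OF r])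
  have "stepZ (a', b', m', n') (fam \<omega>) = (a, b, m, n)" using Suc.prems r by (simp add: runZ_Suc_right)
  then show ?case using IH by (auto simp: stepZ_def fam_def psum_def split: if_splits)
qed

end

context setting begin

lemma XX_meas: "i \<in> IS \<Longrightarrow> XX i \<in> measurable M (count_space UNIV)"
  using ind by (auto simp: indep_vars_def)

lemma run_meas: "(\<lambda>\<omega>. Vf p (posf (runZ n (i, j, 0, 0) (fam \<omega>)))) \<in> borel_measurable M"
proof -
  have e: "runZ n (i, j, 0, 0) (fam \<omega>) = runZ n (i, j, 0, 0) (restrict (\<lambda>i. XX i \<omega>) (Jset 0 0))" for \<omega>
    by (rule runZ_dep) (auto simp: fam_def)
  have "(\<lambda>\<omega>. restrict (\<lambda>i. XX i \<omega>) (Jset 0 0)) \<in> measurable M (PiM (Jset 0 0) (\<lambda>_. count_space UNIV))"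
    by (rule measurable_restrict) (use XX_meas J_sub in blast)
  from measurable_compose[OF this runZ_meas[of 0 0 0 0 n i j]]
  have "(\<lambda>\<omega>. runZ n (i, j, 0, 0) (restrict (\<lambda>i. XX i \<omega>) (Jset 0 0))) \<in> measurable M (count_space UNIV)" by simp
  then have "(\<lambda>\<omega>. runZ n (i, j, 0, 0) (fam \<omega>)) \<in> measurable M (count_space UNIV)" by (simp add: e)
  then show ?thesis by (rule measurable_compose) simp
qed

lemma pointwise:
  assumes pos: "\<And>k. 1 \<le> fam \<omega> (Inl (Suc k))" "\<And>k. 1 \<le> fam \<omega> (Inr (Suc k))" and p: "1 \<le> p"
  shows "enat_powr (meet_time Y Yt i j \<omega>) p \<le> (SUP n. Vf p (posf (runZ n (i, j, 0, 0) (fam \<omega>))))"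
proof (cases "\<exists>n. absb (fst (runZ n (i, j, 0, 0) (fam \<omega>))) (fst (snd (runZ n (i, j, 0, 0) (fam \<omega>))))")
  case True
  then obtain n where ab: "absb (fst (runZ n (i, j, 0, 0) (fam \<omega>))) (fst (snd (runZ n (i, j, 0, 0) (fam \<omega>))))" by blast
  obtain a b m k where r: "runZ n (i, j, 0, 0) (fam \<omega>) = (a, b, m, k)" by (cases "runZ n (i, j, 0, 0) (fam \<omega>)") auto
  have ab': "a = b" "1 \<le> a" using ab r by (auto simp: absb_def)
  have iv: "a = i + psum Y m \<omega> \<and> b = j + psum Yt k \<omega>" by (rule inv[OF r])
  have mem: "enat a \<in> {enat l | l. l \<ge> 1 \<and> (\<exists>m n. i + psum Y m \<omega> = l \<and> j + psum Yt n \<omega> = l)}"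
    using iv ab' by auto
  have le: "meet_time Y Yt i j \<omega> \<le> enat a"
    unfolding meet_time_def by (rule Inf_lower[OF mem])
  obtain l where l1: "meet_time Y Yt i j \<omega> = enat l" using enat_ile[OF le] by blast
  have l: "meet_time Y Yt i j \<omega> = enat l" "l \<le> a" using l1 le by auto
  have "enat_powr (meet_time Y Yt i j \<omega>) p = ennreal (real l powr p)" by (simp add: l enat_powr_def)
  also have "\<dots> \<le> Vf p (posf (runZ n (i, j, 0, 0) (fam \<omega>)))"
  proof -
    have mm: "max (mx (posf (runZ n (i, j, 0, 0) (fam \<omega>)))) 1 = a" using r ab' by (simp add: posf_def mx_def)
    have "real l powr p \<le> real a powr p" using l p by (intro powr_mono2) auto
    then show ?thesis unfolding Vf_def mm by (rule ennreal_leI)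
  qed
  also have "\<dots> \<le> (SUP n. Vf p (posf (runZ n (i, j, 0, 0) (fam \<omega>))))" by (rule SUP_upper) simp
  finally show ?thesis .
next
  case False
  have T: "(SUP n. Vf p (posf (runZ n (i, j, 0, 0) (fam \<omega>)))) = \<top>"
  proof (subst SUP_eq_top_iff, intro allI impI)
    fix x :: ennreal assume "x < \<top>"
    then obtain r where x: "x = ennreal r" "0 \<le> r" by (cases x rule: ennreal_cases) auto
    define n where "n = 2 * (nat \<lceil>r\<rceil> + 1)"
    have g: "fst (i, j, 0::nat, 0::nat) + fst (snd (i, j, 0::nat, 0::nat)) + n
        \<le> fst (runZ n (i, j, 0, 0) (fam \<omega>)) + fst (snd (runZ n (i, j, 0, 0) (fam \<omega>)))"
      apply (rule growth[OF pos(1) pos(2)])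
      using False by blast
    let ?m = "mx (posf (runZ n (i, j, 0, 0) (fam \<omega>)))"
    have "n \<le> 2 * ?m" using g by (simp add: mx_def posf_def)
    then have "nat \<lceil>r\<rceil> + 1 \<le> ?m" by (simp add: n_def)
    then have rm: "r < real ?m" by linarith
    have m1: "real ?m \<le> real (max ?m 1)" by simp
    have "real (max ?m 1) \<le> real (max ?m 1) powr p"
    proof -
      have "real (max ?m 1) powr 1 \<le> real (max ?m 1) powr p" using p by (intro powr_mono) auto
      then show ?thesis by simp
    qed
    then have rr: "r < real (max ?m 1) powr p" using rm m1 by linarith
    have "ennreal r < Vf p (posf (runZ n (i, j, 0, 0) (fam \<omega>)))"
      unfolding Vf_def using rr x(2) by (intro ennreal_lessI) auto
    then show "\<exists>n\<in>UNIV. x < Vf p (posf (runZ n (i, j, 0, 0) (fam \<omega>)))" using x by blast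
  qed
  show ?thesis unfolding T by (rule top_greatest)
qed

lemma final_link:
  assumes AE1: "AE y in mu. 1 \<le> y" and p: "1 \<le> p"
  shows "(\<integral>\<^sup>+\<omega>. enat_powr (meet_time Y Yt i j \<omega>) p \<partial>M) \<le> (SUP n. (Pop mu ^^ n) (Vf p) (i, j))"
proof -
  have AEk: "AE \<omega> in M. 1 \<le> fam \<omega> i" if "i \<in> IS" for i
  proof -
    have d: "distr M (count_space UNIV) (XX i) = mu" using that by (auto simp: IS_def dY dYt)
    have "AE y in distr M (count_space UNIV) (XX i). 1 \<le> y" unfolding d by (rule AE1)
    then show ?thesis by (subst (asm) AE_distr_iff) (auto simp: XX_meas that fam_def)
  qed
  have AEall: "AE \<omega> in M. \<forall>k. 1 \<le> fam \<omega> (Inl (Suc k)) \<and> 1 \<le> fam \<omega> (Inr (Suc k))"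
    by (subst AE_all_countable, intro allI AE_conjI AEk) (auto simp: IS_def)
  have "(\<integral>\<^sup>+\<omega>. enat_powr (meet_time Y Yt i j \<omega>) p \<partial>M)
      \<le> (\<integral>\<^sup>+\<omega>. (SUP n. Vf p (posf (runZ n (i, j, 0, 0) (fam \<omega>)))) \<partial>M)"
    by (intro nn_integral_mono_AE, use AEall in \<open>elim eventually_mono\<close>) (intro pointwise p; blast)
  also have "\<dots> = (SUP n. \<integral>\<^sup>+\<omega>. Vf p (posf (runZ n (i, j, 0, 0) (fam \<omega>))) \<partial>M)"
  proof (rule nn_integral_monotone_convergence_SUP)
    show "incseq (\<lambda>n \<omega>. Vf p (posf (runZ n (i, j, 0, 0) (fam \<omega>))))"
      by (intro incseq_SucI le_funI) (use p in \<open>auto simp: runZ_Suc_right intro!: Vf_mono mx_stepZ\<close>)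
  qed (rule run_meas)
  also have "\<dots> \<le> (SUP n. (Pop mu ^^ n) (Vf p) (i, j))"
    by (intro SUP_mono) (use KL in blast)
  finally show ?thesis .
qed

end

lemma dvd_sum_list': "(\<forall>y\<in>set xs. (h::nat) dvd y) \<Longrightarrow> h dvd sum_list xs"
  by (induction xs) auto

context kern begin

lemma supp_AE: "0 < measure mu {y} \<Longrightarrow> AE x in mu. P x \<Longrightarrow> P y"
proof (rule ccontr)
  assume pos: "0 < measure mu {y}" and ae: "AE x in mu. P x" and np: "\<not> P y"
  let ?N = "{x \<in> space mu. \<not> P x}"
  have "?N \<in> sets mu" by (simp add: sets_mu)
  then have "emeasure mu ?N = 0" using ae AE_iff_measurable[of ?N mu P] by simp
  moreover have "{y} \<subseteq> ?N" using np by (simp add: sets_eq_imp_space_eq[OF sets_mu])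
  ultimately have "emeasure mu {y} = 0" using emeasure_mono[of "{y}" ?N mu] \<open>?N \<in> sets mu\<close> by simp
  then show False using pos by (simp add: emeasure_eq_measure)
qed

lemma AE_supp: "AE y in mu. 0 < measure mu {y}"
proof -
  have "AE y in mu. y \<notin> {y. \<not> 0 < measure mu {y}}"
  proof (rule AE_discrete_difference)
    fix x assume "x \<in> {y. \<not> 0 < measure mu {y}}"
    then have "measure mu {x} = 0" using measure_nonneg[of mu "{x}"] by simp
    then show "emeasure mu {x} = 0" by (simp add: emeasure_eq_measure)
  qed (auto simp: sets_mu)
  then show ?thesis by simp
qed

lemma supp_ex: "\<exists>y. 0 < measure mu {y}"
proof (rule ccontr)
  assume "\<nexists>y. 0 < measure mu {y}"
  then have "AE y in mu. False" using AE_supp by simp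
  then show False by (simp add: AE_False)
qed

definition Hs :: "int set" where
  "Hs = {int (sum_list S) - int (sum_list T) | S T. \<forall>y\<in>set S \<union> set T. 0 < measure mu {y}}"

lemma Hs_add: "x \<in> Hs \<Longrightarrow> x' \<in> Hs \<Longrightarrow> x + x' \<in> Hs"
  unfolding Hs_def
  by clarify (rule_tac x="S @ Sa" in exI, rule_tac x="T @ Ta" in exI, auto)

lemma Hs_neg: "x \<in> Hs \<Longrightarrow> - x \<in> Hs"
  unfolding Hs_def
  by clarify (rule_tac x="T" in exI, rule_tac x="S" in exI, auto)

lemma Hs_0: "0 \<in> Hs"
  unfolding Hs_def by (rule CollectI, rule exI[of _ "[]"], rule exI[of _ "[]"]) simp

lemma Hs_supp: "0 < measure mu {y} \<Longrightarrow> int y \<in> Hs"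
  unfolding Hs_def by (rule CollectI, rule exI[of _ "[y]"], rule exI[of _ "[]"]) simp

lemma Hs_nat_mult: "x \<in> Hs \<Longrightarrow> int n * x \<in> Hs"
  by (induction n) (auto simp: Hs_0 distrib_right intro: Hs_add)

lemma Hs_mult: "x \<in> Hs \<Longrightarrow> (q::int) * x \<in> Hs"
proof (cases "0 \<le> q")
  case True
  assume "x \<in> Hs"
  then show ?thesis using Hs_nat_mult[of x "nat q"] True by simp
next
  case False
  assume "x \<in> Hs"
  then have "int (nat (- q)) * x \<in> Hs" by (rule Hs_nat_mult)
  then have "- (int (nat (- q)) * x) \<in> Hs" by (rule Hs_neg)
  then show ?thesis using False by simp
qed

lemma span_facts:
  assumes AE1: "AE y in mu. 1 \<le> y"
    and hdef: "h = (GREATEST h. 0 < h \<and> (AE y in mu. \<exists>k\<ge>1. y = h * k))"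
  shows "AE y in mu. h dvd y"
    and "\<And>d. h dvd d \<Longrightarrow> \<exists>S T. sum_list S = d + sum_list T \<and> 1 \<le> sum_list S \<and>
                 (\<forall>y\<in>set S \<union> set T. 0 < measure mu {y})"
proof -
  define Pr where "Pr h \<longleftrightarrow> 0 < h \<and> (AE y in mu. \<exists>k\<ge>1. y = h * k)" for h :: nat
  obtain y0 where y0: "0 < measure mu {y0}" using supp_ex by blast
  have y01: "1 \<le> y0" using supp_AE[OF y0 AE1] .
  have bnd: "Pr h' \<Longrightarrow> h' \<le> y0" for h'
  proof -
    assume "Pr h'"
    then obtain k where "k \<ge> 1" "y0 = h' * k" using supp_AE[OF y0] unfolding Pr_def by blast
    then show ?thesis by simp
  qed
  have P1: "Pr 1" unfolding Pr_def using AE1 by (auto elim!: eventually_mono)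
  have Ph: "Pr h" unfolding hdef Pr_def[symmetric] by (rule GreatestI_nat[of Pr 1 y0, OF P1 bnd])
  then show AEh: "AE y in mu. h dvd y" unfolding Pr_def by (auto elim!: eventually_mono)
  have hsupp: "0 < measure mu {y} \<Longrightarrow> h dvd y" for y using supp_AE[OF _ AEh] .
  have hHs: "x \<in> Hs \<Longrightarrow> int h dvd x" for x
  proof -
    assume "x \<in> Hs"
    then obtain S T where x: "x = int (sum_list S) - int (sum_list T)" and ST: "\<forall>y\<in>set S \<union> set T. 0 < measure mu {y}"
      unfolding Hs_def by blast
    have "h dvd sum_list S" using ST hsupp by (intro dvd_sum_list') auto
    moreover have "h dvd sum_list T" using ST hsupp by (intro dvd_sum_list') auto
    ultimately show ?thesis unfolding x by (simp add: int_dvd_int_iff dvd_diff)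
  qed
  define g where "g = (LEAST g. 0 < g \<and> int g \<in> Hs)"
  have gex: "0 < y0 \<and> int y0 \<in> Hs" using y01 Hs_supp[OF y0] by simp
  have g: "0 < g" "int g \<in> Hs" using LeastI[of "\<lambda>g. 0 < g \<and> int g \<in> Hs", OF gex] by (auto simp: g_def)
  have gmin: "0 < g' \<Longrightarrow> int g' \<in> Hs \<Longrightarrow> g \<le> g'" for g' unfolding g_def by (rule Least_le) simp
  have gdvd: "x \<in> Hs \<Longrightarrow> int g dvd x" for x
  proof -
    assume x: "x \<in> Hs"
    have "x mod int g = x + (- (x div int g)) * int g" by (simp add: minus_div_mult_eq_mod[symmetric])
    also have "\<dots> \<in> Hs" using x g by (intro Hs_add Hs_mult)
    finally have m: "x mod int g \<in> Hs" .
    have m0: "0 \<le> x mod int g" "x mod int g < int g" using g by auto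
    show ?thesis
    proof (rule ccontr)
      assume "\<not> int g dvd x"
      then have "0 < x mod int g" using m0 by (simp add: dvd_eq_mod_eq_0 order_le_neq_trans)
      then have "g \<le> nat (x mod int g)" using m by (intro gmin) auto
      then show False using m0 by linarith
    qed
  qed
  have Pg: "Pr g"
  proof -
    have "AE y in mu. \<exists>k\<ge>1. y = g * k" using AE_supp AE1
    proof eventually_elim
      case (elim y)
      have "int g dvd int y" using gdvd[OF Hs_supp[OF elim(1)]] .
      then obtain k where "y = g * k" by (auto simp: int_dvd_int_iff elim!: dvdE)
      moreover have "k \<ge> 1" using elim(2) \<open>y = g * k\<close> by (cases k) auto
      ultimately show ?case by blast
    qed
    then show ?thesis using g by (simp add: Pr_def)
  qed
  have "g \<le> h" unfolding hdef Pr_def[symmetric] by (rule Greatest_le_nat[of Pr g y0, OF Pg bnd])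
  moreover have "h \<le> g"
  proof -
    have "int h dvd int g" by (rule hHs[OF g(2)])
    then show ?thesis using g(1) by (simp add: int_dvd_int_iff dvd_imp_le)
  qed
  ultimately have hg: "h = g" by simp
  fix d assume hd: "h dvd d"
  show "\<exists>S T. sum_list S = d + sum_list T \<and> 1 \<le> sum_list S \<and> (\<forall>y\<in>set S \<union> set T. 0 < measure mu {y})"
  proof (cases "d = 0")
    case True
    then show ?thesis using y0 y01 by (intro exI[of _ "[y0]"] exI[of _ "[y0]"]) auto
  next
    case False
    obtain q where "d = g * q" using hd hg by blast
    then have "int d = int q * int g" by simp
    also have "\<dots> \<in> Hs" using g by (intro Hs_mult)
    finally obtain S T where ST: "int d = int (sum_list S) - int (sum_list T)" "\<forall>y\<in>set S \<union> set T. 0 < measure mu {y}"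
      unfolding Hs_def by blast
    have "sum_list S = d + sum_list T" using ST(1) by linarith
    then show ?thesis using ST False by (intro exI[of _ S] exI[of _ T]) auto
  qed
qed

end

lemma mom_pointwise:
  fixes y :: nat and p :: real
  assumes p: "0 \<le> p"
  shows "(1 + 2 * real y) powr (p + 1) \<le> 3 powr (p + 1) * (1 + real y powr (p + 1))"
proof (cases "y = 0")
  case True
  have "1 \<le> (3::real) powr (p + 1)" using p by (simp add: ge_one_powr_ge_zero)
  then show ?thesis using True by simp
next
  case False
  then have "1 + 2 * real y \<le> 3 * real y" by simp
  then have "(1 + 2 * real y) powr (p + 1) \<le> (3 * real y) powr (p + 1)" using p by (intro powr_mono2) auto
  also have "\<dots> = 3 powr (p + 1) * real y powr (p + 1)" by (simp add: powr_mult)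
  also have "\<dots> \<le> 3 powr (p + 1) * (1 + real y powr (p + 1))" by (intro mult_left_mono) auto
  finally show ?thesis .
qed

theorem lemmaA1:
  fixes M :: "'a measure" and Y Yt :: "nat \<Rightarrow> 'a \<Rightarrow> nat" and p :: real
  assumes "prob_space M"
    and "prob_space.indep_vars M (\<lambda>_. count_space UNIV)
           (\<lambda>x. case x of Inl k \<Rightarrow> Y k | Inr k \<Rightarrow> Yt k)
           ({Inl k | k. k \<ge> 1} \<union> {Inr k | k. k \<ge> 1})"
    and "\<And>k. k \<ge> 1 \<Longrightarrow> distr M (count_space UNIV) (Y k) = distr M (count_space UNIV) (Y 1)"
    and "\<And>k. k \<ge> 1 \<Longrightarrow> distr M (count_space UNIV) (Yt k) = distr M (count_space UNIV) (Y 1)"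
    and "AE \<omega> in M. Y 1 \<omega> \<ge> 1"
    and "1 \<le> p"
    and "(\<integral>\<^sup>+ \<omega>. ennreal (real (Y 1 \<omega>) powr (p + 1)) \<partial>M) < \<infinity>"
  shows "\<exists>C::real. \<forall>i j. span M (Y 1) dvd i \<and> span M (Y 1) dvd j \<longrightarrow>
           (\<integral>\<^sup>+ \<omega>. enat_powr (meet_time Y Yt i j \<omega>) p \<partial>M)
             \<le> ennreal (C * (1 + real i powr p + real j powr p))"
proof -
  note PM = assms(1)
  define mu where "mu = distr M (count_space UNIV) (Y 1)"
  have ind: "prob_space.indep_vars M (\<lambda>_. count_space UNIV) (\<lambda>x. case x of Inl k \<Rightarrow> Y k | Inr k \<Rightarrow> Yt k) IS"
    using assms(2) by (simp add: IS_def)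
  have Y1m: "Y 1 \<in> measurable M (count_space UNIV)"
  proof -
    have "\<forall>i\<in>IS. (\<lambda>x. case x of Inl k \<Rightarrow> Y k | Inr k \<Rightarrow> Yt k) i \<in> measurable M (count_space UNIV)"
      using ind PM by (simp add: prob_space.indep_vars_def)
    moreover have "Inl 1 \<in> IS" by (simp add: IS_def)
    ultimately have "(\<lambda>x. case x of Inl k \<Rightarrow> Y k | Inr k \<Rightarrow> Yt k) (Inl 1) \<in> measurable M (count_space UNIV)"
      by blast
    then show ?thesis by simp
  qed
  have kmu: "kern mu"
    unfolding mu_def
    by (intro kern.intro kern_axioms.intro prob_space.prob_space_distr[OF PM Y1m]) simp
  have sett: "setting M Y Yt mu"
  proof (intro setting.intro setting_axioms.intro PM ind kmu)
    show "\<And>k. 1 \<le> k \<Longrightarrow> distr M (count_space UNIV) (Y k) = mu" unfolding mu_def by (rule assms(3))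
    show "\<And>k. 1 \<le> k \<Longrightarrow> distr M (count_space UNIV) (Yt k) = mu" unfolding mu_def by (rule assms(4))
  qed
  have AEd: "(AE y in mu. P y) \<longleftrightarrow> (AE \<omega> in M. P (Y 1 \<omega>))" for P
    unfolding mu_def by (rule AE_distr_iff[OF Y1m]) simp
  have AE1: "AE y in mu. 1 \<le> y" using assms(5) by (simp add: AEd)
  have p0: "0 \<le> p" using assms(6) by simp
  have mom: "(\<integral>\<^sup>+y. ennreal ((1 + 2 * real y) powr (p + 1)) \<partial>mu) < \<infinity>"
  proof -
    have "(\<integral>\<^sup>+y. ennreal ((1 + 2 * real y) powr (p + 1)) \<partial>mu)
        \<le> (\<integral>\<^sup>+y. ennreal (3 powr (p + 1)) * (1 + ennreal (real y powr (p + 1))) \<partial>mu)"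
    proof (intro nn_integral_mono)
      fix y :: nat
      have "ennreal ((1 + 2 * real y) powr (p + 1)) \<le> ennreal (3 powr (p + 1) * (1 + real y powr (p + 1)))"
        by (rule ennreal_leI, rule mom_pointwise[OF p0])
      also have "\<dots> = ennreal (3 powr (p + 1)) * ennreal (1 + real y powr (p + 1))"
        by (rule ennreal_mult) auto
      also have "ennreal (1 + real y powr (p + 1)) = 1 + ennreal (real y powr (p + 1))"
        by (subst ennreal_plus) auto
      finally show "ennreal ((1 + 2 * real y) powr (p + 1)) \<le> ennreal (3 powr (p + 1)) * (1 + ennreal (real y powr (p + 1)))" .
    qed
    also have "\<dots> = ennreal (3 powr (p + 1)) * (1 + (\<integral>\<^sup>+y. ennreal (real y powr (p + 1)) \<partial>mu))"
    proof -
      have pmu: "prob_space mu" unfolding mu_def by (rule prob_space.prob_space_distr[OF PM Y1m])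
      have "(\<integral>\<^sup>+y. ennreal (3 powr (p + 1)) * (1 + ennreal (real y powr (p + 1))) \<partial>mu)
          = ennreal (3 powr (p + 1)) * (\<integral>\<^sup>+y. 1 + ennreal (real y powr (p + 1)) \<partial>mu)"
        by (rule nn_integral_cmult) (rule kern.meas_any[OF kmu])
      also have "(\<integral>\<^sup>+y. 1 + ennreal (real y powr (p + 1)) \<partial>mu) = (\<integral>\<^sup>+y. 1 \<partial>mu) + (\<integral>\<^sup>+y. ennreal (real y powr (p + 1)) \<partial>mu)"
        by (rule nn_integral_add) (rule kern.meas_any[OF kmu])+
      also have "(\<integral>\<^sup>+y. 1 \<partial>mu) = 1" using prob_space.emeasure_space_1[OF pmu] by simp
      finally show ?thesis .
    qed
    also have "(\<integral>\<^sup>+y. ennreal (real y powr (p + 1)) \<partial>mu) = (\<integral>\<^sup>+\<omega>. ennreal (real (Y 1 \<omega>) powr (p + 1)) \<partial>M)"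
      unfolding mu_def by (rule nn_integral_distr[OF Y1m]) simp
    also have "ennreal (3 powr (p + 1)) * (1 + (\<integral>\<^sup>+\<omega>. ennreal (real (Y 1 \<omega>) powr (p + 1)) \<partial>M)) < \<infinity>"
      using assms(7) by (simp add: ennreal_mult_less_top)
    finally show ?thesis .
  qed
  have k2: "kern2 mu p" by (intro kern2.intro kern2_axioms.intro kmu assms(6) mom)
  define h where "h = span M (Y 1)"
  have hdef: "h = (GREATEST h. 0 < h \<and> (AE y in mu. \<exists>k\<ge>1. y = h * k))"
    unfolding h_def span_def by (simp add: AEd)
  note sf = kern.span_facts[OF kmu AE1 hdef]
  obtain y0 where y0: "0 < measure mu {y0}" using kern.supp_ex[OF kmu] by blast
  have y01: "1 \<le> y0" using kern.supp_AE[OF kmu y0 AE1] .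
  have k3: "kern3 mu p h y0"
    by (intro kern3.intro kern3_axioms.intro k2 sf y0 y01) (use sf(2) in blast)
  obtain C where C: "\<And>s n. good h s \<Longrightarrow> (Pop mu ^^ n) (Vf p) s \<le> ennreal (C * (1 + real (fst s) powr p + real (snd s) powr p))"
    using kern3.kernel_main[OF k3] by blast
  show ?thesis
  proof (intro exI[of _ C] allI impI)
    fix i j assume ij: "span M (Y 1) dvd i \<and> span M (Y 1) dvd j"
    have "(\<integral>\<^sup>+ \<omega>. enat_powr (meet_time Y Yt i j \<omega>) p \<partial>M) \<le> (SUP n. (Pop mu ^^ n) (Vf p) (i, j))"
      by (rule setting.final_link[OF sett AE1 assms(6)])
    also have "\<dots> \<le> ennreal (C * (1 + real i powr p + real j powr p))"
      using C[of "(i, j)"] ij by (intro SUP_least) (auto simp: good_def h_def)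
    finally show "(\<integral>\<^sup>+ \<omega>. enat_powr (meet_time Y Yt i j \<omega>) p \<partial>M) \<le> ennreal (C * (1 + real i powr p + real j powr p))" .
  qed
qed

end
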